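(* Let $\epsilon\in(0,2)$ and let $\mathcal{L}^2=L^2(-\pi,\pi)$. Define the following operators in $\mathcal{L}^2$: (i) $L$: $(Ly)(x)=\epsilon\,(\sin(x)\,y'(x))'+y'(x)$, with domain $\mathfrak{D}(L)$ consisting of all absolutely continuous $2\pi$-periodic functions $y$ (i.e. $y(-\pi)=y(\pi)$) for which $\sin(x)y'(x)$ is locally absolutely continuous, so that the expression $(Ly)(x)$ is defined, and $(Ly)(x)\in\mathcal{L}^2$; (ii) $S$: $(Sy)(x)=y'(x)$, with domain consisting of all absolutely continuous $y$ on $[-\pi,\pi]$ with $y'\in\mathcal{L}^2$ and $y(-\pi)=y(\pi)$; (iii) $M$: $(My)(x)=\epsilon\,(\sin(x)\,y(x))'+y(x)$, with domain consisting of all $y\in\mathcal{L}^2$ for which $\sin(x)y(x)$ is absolutely continuous and $(My)(x)\in\mathcal{L}^2$. Then $L=MS$, where $MS$ is the operator product with domain $\{y\in\mathfrak{D}(S): Sy\in\mathfrak{D}(M)\}$; in particular $\mathfrak{D}(L)=\mathfrak{D}(MS)$.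
   Context: All functions are complex-valued on $(-\pi,\pi)$; $\mathcal{L}^2$ is the standard Lebesgue space on $(-\pi,\pi)$. Equality of unbounded operators means equality of domains and of actions. *)

theory Defs
  imports "HOL-Analysis.Analysis"
begin

definition Om :: "real measure" where
  "Om = lebesgue_on {-pi<..<pi}"

definition sq_int :: "(real \<Rightarrow> complex) \<Rightarrow> bool" where
  "sq_int y \<longleftrightarrow> y \<in> borel_measurable Om \<and> integrable Om (\<lambda>x. (norm (y x))^2)"

definition abs_cont_on :: "real \<Rightarrow> real \<Rightarrow> (real \<Rightarrow> complex) \<Rightarrow> bool" where
  "abs_cont_on a b f \<longleftrightarrow>
     (\<forall>e>0. \<exists>d>0. \<forall>(n::nat) (u::nat \<Rightarrow> real) (v::nat \<Rightarrow> real).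
        (\<forall>k<n. a \<le> u k \<and> u k \<le> v k \<and> v k \<le> b) \<longrightarrow>
        (\<forall>i<n. \<forall>j<n. i \<noteq> j \<longrightarrow> v i \<le> u j \<or> v j \<le> u i) \<longrightarrow>
        (\<Sum>k<n. v k - u k) < d \<longrightarrow>
        (\<Sum>k<n. norm (f (v k) - f (u k))) < e)"

definition loc_abs_cont :: "(real \<Rightarrow> complex) \<Rightarrow> bool" where
  "loc_abs_cont f \<longleftrightarrow> (\<forall>a b. -pi < a \<longrightarrow> b < pi \<longrightarrow> abs_cont_on a b f)"

text \<open>Graphs of the operators, on representatives; y and f are L2 representatives and
  all conditions are invariant under a.e. modification of y and f.
  graph_X y f means: (the class of) y lies in the domain of X and X y = f in L2.\<close>

definition graph_L :: "real \<Rightarrow> (real \<Rightarrow> complex) \<Rightarrow> (real \<Rightarrow> complex) \<Rightarrow> bool" where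
  "graph_L \<epsilon> y f \<longleftrightarrow> sq_int y \<and> sq_int f \<and>
     (\<exists>y0 g p q.
        (AE x in Om. y x = y0 x) \<and> abs_cont_on (-pi) pi y0 \<and> y0 (-pi) = y0 pi \<and>
        (AE x in Om. (y0 has_vector_derivative g x) (at x)) \<and>
        loc_abs_cont p \<and> (AE x in Om. p x = complex_of_real (sin x) * g x) \<and>
        (AE x in Om. (p has_vector_derivative q x) (at x)) \<and>
        (AE x in Om. f x = complex_of_real \<epsilon> * q x + g x))"

definition graph_S :: "(real \<Rightarrow> complex) \<Rightarrow> (real \<Rightarrow> complex) \<Rightarrow> bool" where
  "graph_S y f \<longleftrightarrow> sq_int y \<and> sq_int f \<and>
     (\<exists>y0. (AE x in Om. y x = y0 x) \<and> abs_cont_on (-pi) pi y0 \<and> y0 (-pi) = y0 pi \<and>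
        (AE x in Om. (y0 has_vector_derivative f x) (at x)))"

definition graph_M :: "real \<Rightarrow> (real \<Rightarrow> complex) \<Rightarrow> (real \<Rightarrow> complex) \<Rightarrow> bool" where
  "graph_M \<epsilon> y f \<longleftrightarrow> sq_int y \<and> sq_int f \<and>
     (\<exists>p q. abs_cont_on (-pi) pi p \<and> (AE x in Om. p x = complex_of_real (sin x) * y x) \<and>
        (AE x in Om. (p has_vector_derivative q x) (at x)) \<and>
        (AE x in Om. f x = complex_of_real \<epsilon> * q x + y x))"

definition graph_MS :: "real \<Rightarrow> (real \<Rightarrow> complex) \<Rightarrow> (real \<Rightarrow> complex) \<Rightarrow> bool" where
  "graph_MS \<epsilon> y f \<longleftrightarrow> (\<exists>z. graph_S y z \<and> graph_M \<epsilon> z f)"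

end

theory Submission
  imports Defs
begin

lemma ac_pairs:
  assumes "abs_cont_on a b F" "e > 0"
  obtains d where "d > 0" "\<And>P. finite P \<Longrightarrow> (\<forall>(u,v)\<in>P. a \<le> u \<and> u \<le> v \<and> v \<le> b) \<Longrightarrow>
      (\<forall>(u,v)\<in>P. \<forall>(u',v')\<in>P. (u,v) \<noteq> (u',v') \<longrightarrow> v \<le> u' \<or> v' \<le> u) \<Longrightarrow>
      (\<Sum>(u,v)\<in>P. v - u) < d \<Longrightarrow> (\<Sum>(u,v)\<in>P. norm (F v - F u)) < e"
proof -
  have "\<exists>d>0. \<forall>(n::nat) (u::nat \<Rightarrow> real) (v::nat \<Rightarrow> real).
        (\<forall>k<n. a \<le> u k \<and> u k \<le> v k \<and> v k \<le> b) \<longrightarrow>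
        (\<forall>i<n. \<forall>j<n. i \<noteq> j \<longrightarrow> v i \<le> u j \<or> v j \<le> u i) \<longrightarrow>
        (\<Sum>k<n. v k - u k) < d \<longrightarrow>
        (\<Sum>k<n. norm (F (v k) - F (u k))) < e"
    using assms unfolding abs_cont_on_def by blast
  then obtain d where d: "d > 0" and dd0: "\<forall>(n::nat) (u::nat \<Rightarrow> real) (v::nat \<Rightarrow> real).
        (\<forall>k<n. a \<le> u k \<and> u k \<le> v k \<and> v k \<le> b) \<longrightarrow>
        (\<forall>i<n. \<forall>j<n. i \<noteq> j \<longrightarrow> v i \<le> u j \<or> v j \<le> u i) \<longrightarrow>
        (\<Sum>k<n. v k - u k) < d \<longrightarrow>
        (\<Sum>k<n. norm (F (v k) - F (u k))) < e" by blast
  have dd: "\<And>(n::nat) u v. (\<forall>k<n. a \<le> u k \<and> u k \<le> v k \<and> v k \<le> b) \<Longrightarrow>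
        (\<forall>i<n. \<forall>j<n. i \<noteq> j \<longrightarrow> v i \<le> u j \<or> v j \<le> u i) \<Longrightarrow>
        (\<Sum>k<n. v k - u k) < d \<Longrightarrow>
        (\<Sum>k<n. norm (F (v k) - F (u k))) < e"
    using dd0 by blast
  show ?thesis
  proof (rule that[OF d])
    fix P :: "(real \<times> real) set"
    assume P: "finite P" and inP: "\<forall>(u,v)\<in>P. a \<le> u \<and> u \<le> v \<and> v \<le> b"
      and no: "\<forall>(u,v)\<in>P. \<forall>(u',v')\<in>P. (u,v) \<noteq> (u',v') \<longrightarrow> v \<le> u' \<or> v' \<le> u"
      and sm: "(\<Sum>(u,v)\<in>P. v - u) < d"
    obtain h where h: "bij_betw h {0..<card P} P" using ex_bij_betw_nat_finite[OF P] by blast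
    have hP: "h k \<in> P" if "k < card P" for k using h that by (auto simp: bij_betw_def)
    have hinj: "h i \<noteq> h j" if "i < card P" "j < card P" "i \<noteq> j" for i j
      using h that by (auto simp: bij_betw_def inj_on_def)
    have e1: "(\<Sum>k<card P. snd (h k) - fst (h k)) = (\<Sum>(u,v)\<in>P. v - u)"
      using sum.reindex_bij_betw[OF h, of "\<lambda>(u,v). v - u"] by (simp add: lessThan_atLeast0 case_prod_beta)
    have e2: "(\<Sum>k<card P. norm (F (snd (h k)) - F (fst (h k)))) = (\<Sum>(u,v)\<in>P. norm (F v - F u))"
      using sum.reindex_bij_betw[OF h, of "\<lambda>(u,v). norm (F v - F u)"] by (simp add: lessThan_atLeast0 case_prod_beta)
    have "(\<Sum>k<card P. norm (F (snd (h k)) - F (fst (h k)))) < e"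
    proof (rule dd)
      show "\<forall>k<card P. a \<le> fst (h k) \<and> fst (h k) \<le> snd (h k) \<and> snd (h k) \<le> b"
      proof (intro allI impI)
        fix k assume "k < card P"
        then have "h k \<in> P" by (rule hP)
        then show "a \<le> fst (h k) \<and> fst (h k) \<le> snd (h k) \<and> snd (h k) \<le> b"
          using inP by (cases "h k") auto
      qed
      show "\<forall>i<card P. \<forall>j<card P. i \<noteq> j \<longrightarrow> snd (h i) \<le> fst (h j) \<or> snd (h j) \<le> fst (h i)"
      proof (intro allI impI)
        fix i j assume "i < card P" "j < card P" "i \<noteq> j"
        then have "h i \<in> P" "h j \<in> P" "h i \<noteq> h j" using hP hinj by auto
        moreover obtain u v u' v' where "h i = (u,v)" "h j = (u',v')" by (cases "h i"; cases "h j") auto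
        ultimately show "snd (h i) \<le> fst (h j) \<or> snd (h j) \<le> fst (h i)"
          using no by auto
      qed
      show "(\<Sum>k<card P. snd (h k) - fst (h k)) < d" using e1 sm by simp
    qed
    then show "(\<Sum>(u,v)\<in>P. norm (F v - F u)) < e" using e2 by simp
  qed
qed

lemma sum_len_le_measure:
  fixes P :: "(real \<times> real) set"
  assumes P: "finite P" and inP: "\<forall>(u,v)\<in>P. u \<le> v \<and> {u..v} \<subseteq> T"
      and no: "\<forall>(u,v)\<in>P. \<forall>(u',v')\<in>P. (u,v) \<noteq> (u',v') \<longrightarrow> v \<le> u' \<or> v' \<le> u"
      and T: "T \<in> lmeasurable"
  shows "(\<Sum>(u,v)\<in>P. v - u) \<le> measure lebesgue T"
proof -
  let ?f = "\<lambda>(u,v). {u..v::real}"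
  have "measure lebesgue (\<Union>(?f ` P)) = (\<Sum>x\<in>P. measure lebesgue (?f x))"
  proof (rule measure_negligible_finite_Union_image[OF P])
    show "?f x \<in> lmeasurable" if "x \<in> P" for x by (cases x) auto
    show "pairwise (\<lambda>x y. negligible (?f x \<inter> ?f y)) P"
    proof (unfold pairwise_def, intro ballI impI)
      fix x y assume a: "x \<in> P" "y \<in> P" "x \<noteq> y"
      obtain u v u' v' where xy: "x = (u,v)" "y = (u',v')" by (cases x; cases y) auto
      have "v \<le> u' \<or> v' \<le> u" using no a xy by auto
      then have "{u..v} \<inter> {u'..v'} \<subseteq> {v, u}" by auto
      then show "negligible (?f x \<inter> ?f y)" unfolding xy prod.case
        by (meson finite.emptyI finite_insert negligible_finite negligible_subset)
    qed
  qed
  also have "\<dots> = (\<Sum>(u,v)\<in>P. v - u)"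
    by (rule sum.cong) (use inP in auto)
  finally have eq: "measure lebesgue (\<Union>(?f ` P)) = (\<Sum>(u,v)\<in>P. v - u)" .
  have "measure lebesgue (\<Union>(?f ` P)) \<le> measure lebesgue T"
  proof (rule measure_mono_fmeasurable)
    show "\<Union>(?f ` P) \<subseteq> T" using inP by auto
    show "\<Union>(?f ` P) \<in> sets lebesgue"
      using P by (intro sets.finite_UN) auto
  qed (use T in auto)
  then show ?thesis using eq by simp
qed

lemma ftc_ac:
  fixes F h :: "real \<Rightarrow> complex"
  assumes ab: "a \<le> b" and ac: "abs_cont_on a b F" and N: "negligible N"
    and der: "\<And>x. x \<in> {a<..<b} - N \<Longrightarrow> (F has_vector_derivative h x) (at x)"
  shows "(h has_integral (F b - F a)) {a..b}"
proof -
  define N' where "N' = N \<union> {a,b}"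
  have N': "negligible N'" unfolding N'_def
    by (rule negligible_Un[OF N]) (simp add: negligible_finite)
  define h0 where "h0 x = (if x \<in> N' then 0 else h x)" for x
  have main: "(h0 has_integral (F b - F a)) {a..b}"
    unfolding has_integral_real
  proof (intro allI impI)
    fix e :: real assume e: "e > 0"
    then have e2: "e/2 > 0" by simp
    obtain d0 where d0: "d0 > 0" and acd: "\<And>P. finite P \<Longrightarrow> (\<forall>(u,v)\<in>P. a \<le> u \<and> u \<le> v \<and> v \<le> b) \<Longrightarrow>
      (\<forall>(u,v)\<in>P. \<forall>(u',v')\<in>P. (u,v) \<noteq> (u',v') \<longrightarrow> v \<le> u' \<or> v' \<le> u) \<Longrightarrow>
      (\<Sum>(u,v)\<in>P. v - u) < d0 \<Longrightarrow> (\<Sum>(u,v)\<in>P. norm (F v - F u)) < e/2"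
      using ac_pairs[OF ac e2] by blast
    have N'sets: "N' \<in> sets lebesgue" using N' negligible_imp_sets by blast
    have "d0/2 > 0" using d0 by simp
    then obtain T where T: "open T" "N' \<subseteq> T" "(T - N') \<in> lmeasurable" "emeasure lebesgue (T - N') < ennreal (d0/2)"
      using sets_lebesgue_outer_open[OF N'sets] by metis
    have N'l: "N' \<in> lmeasurable" using N' negligible_imp_measurable by blast
    have TU: "T = (T - N') \<union> N'" using T(2) by auto
    have Tl: "T \<in> lmeasurable" using T(3) N'l TU by (metis fmeasurable.Un)
    have m1: "measure lebesgue (T - N') < d0/2"
      using T(4) emeasure_eq_measure2[OF T(3)] d0 by (simp add: ennreal_less_iff)
    have "measure lebesgue T \<le> measure lebesgue (T - N') + measure lebesgue N'"
      using measure_Un_le[OF fmeasurableD[OF T(3)] fmeasurableD[OF N'l]] TU by simp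
    then have mT: "measure lebesgue T < d0"
      using m1 negligible_imp_measure0[OF N'] d0 by simp
    define \<eta> where "\<eta> = e / (2 * (b - a + 1))"
    have \<eta>: "\<eta> > 0" using e ab by (simp add: \<eta>_def)
    have ex: "\<forall>x. \<exists>\<delta>>0. (x \<in> {a..b} - N' \<longrightarrow> (\<forall>y. norm (y - x) < \<delta> \<longrightarrow> norm (F y - F x - (y - x) *\<^sub>R h x) \<le> \<eta> * norm (y - x)))
               \<and> (x \<in> N' \<longrightarrow> ball x \<delta> \<subseteq> T)"
    proof
      fix x
      show "\<exists>\<delta>>0. (x \<in> {a..b} - N' \<longrightarrow> (\<forall>y. norm (y - x) < \<delta> \<longrightarrow> norm (F y - F x - (y - x) *\<^sub>R h x) \<le> \<eta> * norm (y - x)))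
               \<and> (x \<in> N' \<longrightarrow> ball x \<delta> \<subseteq> T)"
      proof (cases "x \<in> N'")
        case True
        then obtain \<delta> where "\<delta> > 0" "ball x \<delta> \<subseteq> T" using T(1,2) open_contains_ball by blast
        then show ?thesis using True by auto
      next
        case False
        show ?thesis
        proof (cases "x \<in> {a..b}")
          case True
          then have "x \<in> {a<..<b} - N" using False by (auto simp: N'_def)
          then have "(F has_derivative (\<lambda>t. t *\<^sub>R h x)) (at x)" using der has_vector_derivative_def by blast
          then obtain \<delta> where "\<delta>>0" "\<forall>y. norm (y - x) < \<delta> \<longrightarrow> norm (F y - F x - (y - x) *\<^sub>R h x) \<le> \<eta> * norm (y - x)"
            using \<eta> unfolding has_derivative_at_alt by blast
          then show ?thesis using False by auto
        next
          case False
          then show ?thesis using \<open>x \<notin> N'\<close> by (intro exI[of _ 1]) auto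
        qed
      qed
    qed
    obtain d where dall: "\<forall>x. d x > 0 \<and> (x \<in> {a..b} - N' \<longrightarrow> (\<forall>y. norm (y - x) < d x \<longrightarrow> norm (F y - F x - (y - x) *\<^sub>R h x) \<le> \<eta> * norm (y - x)))
               \<and> (x \<in> N' \<longrightarrow> ball x (d x) \<subseteq> T)"
      using choice[OF ex] by blast
    have d: "\<And>x. d x > 0" using dall by blast
    have dder: "\<And>x y. x \<in> {a..b} - N' \<Longrightarrow> norm (y - x) < d x \<Longrightarrow> norm (F y - F x - (y - x) *\<^sub>R h x) \<le> \<eta> * norm (y - x)"
      using dall by blast
    have dN: "\<And>x. x \<in> N' \<Longrightarrow> ball x (d x) \<subseteq> T" using dall by blast
    show "\<exists>\<gamma>. gauge \<gamma> \<and> (\<forall>\<D>. \<D> tagged_division_of {a..b} \<and> \<gamma> fine \<D> \<longrightarrow>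
            norm ((\<Sum>(x,k)\<in>\<D>. Henstock_Kurzweil_Integration.content k *\<^sub>R h0 x) - (F b - F a)) < e)"
    proof (intro exI conjI allI impI)
      show "gauge (\<lambda>x. ball x (d x))" using d gauge_ball_dependent by blast
      fix \<D> assume "\<D> tagged_division_of {a..b} \<and> (\<lambda>x. ball x (d x)) fine \<D>"
      then have Dt: "\<D> tagged_division_of {a..b}" and Df: "(\<lambda>x. ball x (d x)) fine \<D>" by auto
      have fin: "finite \<D>" using Dt by blast
      have Kform: "K = {Inf K..Sup K} \<and> Inf K \<le> x \<and> x \<le> Sup K \<and> a \<le> Inf K \<and> Sup K \<le> b \<and> K \<subseteq> ball x (d x)"
        if xK: "(x,K) \<in> \<D>" for x K
      proof -
        obtain u v where K: "K = cbox u v" using Dt xK by (meson tagged_division_ofD(4))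
        have "x \<in> K" "K \<subseteq> {a..b}" using Dt xK by (blast dest: tagged_division_ofD)+
        then have uv: "u \<le> x" "x \<le> v" "a \<le> u" "v \<le> b" using K by auto
        moreover have "K \<subseteq> ball x (d x)" using Df xK by (auto simp: fine_def)
        ultimately show ?thesis using K by auto
      qed
      have ba: "F b - F a = (\<Sum>(x,K)\<in>\<D>. F (Sup K) - F (Inf K))"
        using additive_tagged_division_1[OF ab Dt, of F] by simp
      define D1 where "D1 = {p \<in> \<D>. fst p \<notin> N'}"
      define D2 where "D2 = {p \<in> \<D>. fst p \<in> N'}"
      have DU: "\<D> = D1 \<union> D2" "D1 \<inter> D2 = {}" by (auto simp: D1_def D2_def)
      have fD: "finite D1" "finite D2" using fin by (auto simp: D1_def D2_def)
      define t where "t = (\<lambda>(x,K). Henstock_Kurzweil_Integration.content K *\<^sub>R h0 x - (F (Sup K) - F (Inf K)))"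
      have "(\<Sum>(x,k)\<in>\<D>. Henstock_Kurzweil_Integration.content k *\<^sub>R h0 x) - (F b - F a) = (\<Sum>p\<in>\<D>. t p)"
        by (simp add: ba t_def sum_subtractf split_def)
      also have "\<dots> = (\<Sum>p\<in>D1. t p) + (\<Sum>p\<in>D2. t p)"
        using DU fD by (simp add: sum.union_disjoint)
      finally have eq: "(\<Sum>(x,k)\<in>\<D>. Henstock_Kurzweil_Integration.content k *\<^sub>R h0 x) - (F b - F a) = (\<Sum>p\<in>D1. t p) + (\<Sum>p\<in>D2. t p)" .
      have b1: "norm (\<Sum>p\<in>D1. t p) \<le> (\<Sum>p\<in>D1. \<eta> * Henstock_Kurzweil_Integration.content (snd p))"
      proof (rule sum_norm_le)
        fix p assume pD1: "p \<in> D1"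
        obtain x K where p: "p = (x,K)" by (cases p)
        have xK: "(x,K) \<in> \<D>" "x \<notin> N'" using pD1 p by (auto simp: D1_def)
        note KF = Kform[OF xK(1)]
        define u where "u = Inf K"
        define v where "v = Sup K"
        have K: "K = {u..v}" "u \<le> x" "x \<le> v" "a \<le> u" "v \<le> b" using KF by (auto simp: u_def v_def)
        have xin: "x \<in> {a..b} - N'" using K xK by auto
        have "u \<in> K" "v \<in> K" using K by auto
        then have "u \<in> ball x (d x)" "v \<in> ball x (d x)" using KF by auto
        then have du: "norm (u - x) < d x" and dv: "norm (v - x) < d x"
          by (auto simp: dist_norm norm_minus_commute)
        have "norm ((v - u) *\<^sub>R h x - (F v - F u)) = norm ((F u - F x - (u - x) *\<^sub>R h x) - (F v - F x - (v - x) *\<^sub>R h x))"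
          by (simp add: algebra_simps)
        also have "\<dots> \<le> norm (F u - F x - (u - x) *\<^sub>R h x) + norm (F v - F x - (v - x) *\<^sub>R h x)"
          by (rule norm_triangle_ineq4)
        also have "\<dots> \<le> \<eta> * norm (u - x) + \<eta> * norm (v - x)"
          using dder[OF xin du] dder[OF xin dv] by (rule add_mono)
        also have "\<dots> = \<eta> * (v - u)" using K(2,3) by (simp add: algebra_simps)
        finally have fin1: "norm ((v - u) *\<^sub>R h x - (F v - F u)) \<le> \<eta> * (v - u)" .
        have c: "Henstock_Kurzweil_Integration.content K = v - u" using K(1) K(2,3) by simp
        have tp: "t p = (v - u) *\<^sub>R h x - (F v - F u)"
          unfolding t_def p prod.case c using xK(2) by (simp add: h0_def u_def v_def)
        show "norm (t p) \<le> \<eta> * Henstock_Kurzweil_Integration.content (snd p)"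
          using fin1 tp c p by simp
      qed
      have "(\<Sum>p\<in>D1. \<eta> * Henstock_Kurzweil_Integration.content (snd p)) \<le> (\<Sum>p\<in>\<D>. \<eta> * Henstock_Kurzweil_Integration.content (snd p))"
        by (rule sum_mono2[OF fin]) (use \<eta> DU in auto)
      also have "\<dots> = \<eta> * (b - a)"
        using additive_content_tagged_division[of \<D> a b] Dt ab
        by (simp add: sum_distrib_left[symmetric] split_def)
      finally have b1': "norm (\<Sum>p\<in>D1. t p) \<le> \<eta> * (b - a)" using b1 by linarith
      define D3 where "D3 = {p \<in> D2. Inf (snd p) < Sup (snd p)}"
      have fD3: "finite D3" using fD by (simp add: D3_def)
      have "norm (\<Sum>p\<in>D2. t p) \<le> (\<Sum>p\<in>D2. norm (F (Sup (snd p)) - F (Inf (snd p))))"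
      proof (rule sum_norm_le)
        fix p assume "p \<in> D2"
        then have "fst p \<in> N'" by (auto simp: D2_def)
        then show "norm (t p) \<le> norm (F (Sup (snd p)) - F (Inf (snd p)))"
          by (cases p) (simp add: t_def h0_def norm_minus_commute)
      qed
      also have "\<dots> = (\<Sum>p\<in>D3. norm (F (Sup (snd p)) - F (Inf (snd p))))"
      proof (rule sum.mono_neutral_right[OF fD(2)])
        show "D3 \<subseteq> D2" by (auto simp: D3_def)
        show "\<forall>p\<in>D2 - D3. norm (F (Sup (snd p)) - F (Inf (snd p))) = 0"
        proof
          fix p assume pp: "p \<in> D2 - D3"
          obtain x K where p: "p = (x,K)" by (cases p)
          have "(x,K) \<in> \<D>" using pp p by (auto simp: D2_def)
          then have "Inf K \<le> Sup K" using Kform by fastforce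
          then have "Inf K = Sup K" using pp p by (auto simp: D3_def)
          then show "norm (F (Sup (snd p)) - F (Inf (snd p))) = 0" using p by simp
        qed
      qed
      also have "\<dots> = (\<Sum>(u,v)\<in>(\<lambda>p. (Inf (snd p), Sup (snd p))) ` D3. norm (F v - F u))"
      proof -
        have inj: "inj_on (\<lambda>p. (Inf (snd p), Sup (snd p))) D3"
        proof (rule inj_onI)
          fix p q assume pq: "p \<in> D3" "q \<in> D3" "(Inf (snd p), Sup (snd p)) = (Inf (snd q), Sup (snd q))"
          obtain x K where p: "p = (x,K)" by (cases p)
          obtain y L where q: "q = (y,L)" by (cases q)
          have m: "(x,K) \<in> \<D>" "(y,L) \<in> \<D>" using pq p q by (auto simp: D3_def D2_def)
          have KL: "K = L" using Kform[OF m(1)] Kform[OF m(2)] pq p q by auto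
          have lt: "Inf K < Sup K" using pq p by (auto simp: D3_def)
          show "p = q"
          proof (rule ccontr)
            assume "p \<noteq> q"
            then have "interior K \<inter> interior L = {}" using tagged_division_ofD(5)[OF Dt m] p q by auto
            moreover have "interior K = {Inf K<..<Sup K}" using Kform[OF m(1)]
              by (metis interior_atLeastAtMost_real)
            ultimately show False using KL lt by auto
          qed
        qed
        show ?thesis by (simp add: sum.reindex[OF inj] split_def)
      qed
      also have "\<dots> < e/2"
      proof (rule acd)
        let ?P = "(\<lambda>p. (Inf (snd p), Sup (snd p))) ` D3"
        show "finite ?P" using fD3 by simp
        have memP: "\<exists>x K. (x,K) \<in> \<D> \<and> x \<in> N' \<and> Inf K < Sup K \<and> uv = (Inf K, Sup K)" if "uv \<in> ?P" for uv
          using that unfolding D3_def D2_def by force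
        have rng: "a \<le> u \<and> u \<le> v \<and> v \<le> b" if uvP: "(u,v) \<in> ?P" for u v
        proof -
          obtain x K where "(x,K) \<in> \<D>" "(u,v) = (Inf K, Sup K)" using memP[OF uvP] by blast
          then show ?thesis using Kform by fastforce
        qed
        then show "\<forall>(u,v)\<in>?P. a \<le> u \<and> u \<le> v \<and> v \<le> b" by blast
        have nov: "v \<le> u' \<or> v' \<le> u" if uP: "(u,v) \<in> ?P" and uP': "(u',v') \<in> ?P" and ne: "(u,v) \<noteq> (u',v')" for u v u' v'
        proof (rule disjCI)
          assume nle: "\<not> v' \<le> u"
          obtain x K where xK: "(x,K) \<in> \<D>" "Inf K < Sup K" "(u,v) = (Inf K, Sup K)" using memP[OF uP] by blast
          obtain x' K' where xK': "(x',K') \<in> \<D>" "Inf K' < Sup K'" "(u',v') = (Inf K', Sup K')" using memP[OF uP'] by blast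
          have "(x,K) \<noteq> (x',K')" using ne xK xK' by auto
          then have dis: "interior K \<inter> interior K' = {}" using tagged_division_ofD(5)[OF Dt xK(1) xK'(1)] by auto
          have iK: "interior K = {u<..<v}" using Kform[OF xK(1)] xK(3)
            by (metis interior_atLeastAtMost_real prod.inject)
          have iK': "interior K' = {u'<..<v'}" using Kform[OF xK'(1)] xK'(3)
            by (metis interior_atLeastAtMost_real prod.inject)
          show "v \<le> u'"
          proof (rule ccontr)
            assume "\<not> v \<le> u'"
            define m where "m = (max u u' + min v v') / 2"
            have "u < v" "u' < v'" using xK xK' by auto
            then have "m \<in> {u<..<v}" "m \<in> {u'<..<v'}" using nle \<open>\<not> v \<le> u'\<close> by (auto simp: m_def)
            then show False using dis iK iK' by auto
          qed
        qed
        then show "\<forall>(u,v)\<in>?P. \<forall>(u',v')\<in>?P. (u,v) \<noteq> (u',v') \<longrightarrow> v \<le> u' \<or> v' \<le> u" by blast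
        have "(\<Sum>(u,v)\<in>?P. v - u) \<le> measure lebesgue T"
        proof (rule sum_len_le_measure[OF \<open>finite ?P\<close> _ _ Tl])
          have "u \<le> v \<and> {u..v} \<subseteq> T" if uvP: "(u,v) \<in> ?P" for u v
          proof -
            obtain x K where xK: "(x,K) \<in> \<D>" "x \<in> N'" "(u,v) = (Inf K, Sup K)" using memP[OF uvP] by blast
            have "K \<subseteq> T" using Kform[OF xK(1)] dN[OF xK(2)] by blast
            then show ?thesis using Kform[OF xK(1)] xK(3) by auto
          qed
          then show "\<forall>(u,v)\<in>?P. u \<le> v \<and> {u..v} \<subseteq> T" by blast
        qed fact
        then show "(\<Sum>(u,v)\<in>?P. v - u) < d0" using mT by linarith
      qed
      finally have b2: "norm (\<Sum>p\<in>D2. t p) < e/2" .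
      have "\<eta> * (b - a) < e/2"
      proof -
        have "\<eta> * (b - a) = (e/2) * ((b - a) / (b - a + 1))" by (simp add: \<eta>_def field_simps)
        also have "\<dots> < (e/2) * 1" using ab e by (intro mult_strict_left_mono) auto
        finally show ?thesis by simp
      qed
      then show "norm ((\<Sum>(x,k)\<in>\<D>. Henstock_Kurzweil_Integration.content k *\<^sub>R h0 x) - (F b - F a)) < e"
        unfolding eq using b1' b2 norm_triangle_ineq[of "\<Sum>p\<in>D1. t p" "\<Sum>p\<in>D2. t p"] by linarith
    qed
  qed
  show ?thesis
    by (rule has_integral_spike[OF N' _ main]) (auto simp: h0_def)
qed

lemma ac_dom:
  assumes F: "abs_cont_on a b F" and G: "abs_cont_on a b G" and c: "c1 \<ge> 0" "c2 \<ge> 0"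
    and H: "\<And>u v. a \<le> u \<Longrightarrow> u \<le> v \<Longrightarrow> v \<le> b \<Longrightarrow> norm (H v - H u) \<le> c1 * norm (F v - F u) + c2 * norm (G v - G u)"
  shows "abs_cont_on a b H"
  unfolding abs_cont_on_def
proof (intro allI impI)
  fix e :: real assume e: "e > 0"
  define e' where "e' = e / (c1 + c2 + 1)"
  have e': "e' > 0" using e c by (simp add: e'_def)
  obtain d1 where d1: "d1 > 0" and D1: "\<forall>(n::nat) (u::nat \<Rightarrow> real) (v::nat \<Rightarrow> real).
        (\<forall>k<n. a \<le> u k \<and> u k \<le> v k \<and> v k \<le> b) \<longrightarrow>
        (\<forall>i<n. \<forall>j<n. i \<noteq> j \<longrightarrow> v i \<le> u j \<or> v j \<le> u i) \<longrightarrow>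
        (\<Sum>k<n. v k - u k) < d1 \<longrightarrow> (\<Sum>k<n. norm (F (v k) - F (u k))) < e'"
    using F e' unfolding abs_cont_on_def by blast
  obtain d2 where d2: "d2 > 0" and D2: "\<forall>(n::nat) (u::nat \<Rightarrow> real) (v::nat \<Rightarrow> real).
        (\<forall>k<n. a \<le> u k \<and> u k \<le> v k \<and> v k \<le> b) \<longrightarrow>
        (\<forall>i<n. \<forall>j<n. i \<noteq> j \<longrightarrow> v i \<le> u j \<or> v j \<le> u i) \<longrightarrow>
        (\<Sum>k<n. v k - u k) < d2 \<longrightarrow> (\<Sum>k<n. norm (G (v k) - G (u k))) < e'"
    using G e' unfolding abs_cont_on_def by blast
  show "\<exists>d>0. \<forall>(n::nat) (u::nat \<Rightarrow> real) (v::nat \<Rightarrow> real).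
        (\<forall>k<n. a \<le> u k \<and> u k \<le> v k \<and> v k \<le> b) \<longrightarrow>
        (\<forall>i<n. \<forall>j<n. i \<noteq> j \<longrightarrow> v i \<le> u j \<or> v j \<le> u i) \<longrightarrow>
        (\<Sum>k<n. v k - u k) < d \<longrightarrow> (\<Sum>k<n. norm (H (v k) - H (u k))) < e"
  proof (intro exI[of _ "min d1 d2"] conjI allI impI)
    show "min d1 d2 > 0" using d1 d2 by simp
    fix n :: nat and u v :: "nat \<Rightarrow> real"
    assume r: "\<forall>k<n. a \<le> u k \<and> u k \<le> v k \<and> v k \<le> b"
      and no: "\<forall>i<n. \<forall>j<n. i \<noteq> j \<longrightarrow> v i \<le> u j \<or> v j \<le> u i"
      and s: "(\<Sum>k<n. v k - u k) < min d1 d2"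
    have sF: "(\<Sum>k<n. norm (F (v k) - F (u k))) < e'" using D1 r no s by auto
    have sG: "(\<Sum>k<n. norm (G (v k) - G (u k))) < e'" using D2 r no s by auto
    have "(\<Sum>k<n. norm (H (v k) - H (u k))) \<le> (\<Sum>k<n. c1 * norm (F (v k) - F (u k)) + c2 * norm (G (v k) - G (u k)))"
      by (rule sum_mono) (use r H in auto)
    also have "\<dots> = c1 * (\<Sum>k<n. norm (F (v k) - F (u k))) + c2 * (\<Sum>k<n. norm (G (v k) - G (u k)))"
      by (simp add: sum.distrib sum_distrib_left)
    also have "\<dots> \<le> c1 * e' + c2 * e'"
      using sF sG c by (intro add_mono mult_left_mono) auto
    also have "\<dots> = (c1 + c2) * e'" by (simp add: algebra_simps)
    also have "\<dots> < (c1 + c2 + 1) * e'" using e' by simp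
    also have "\<dots> = e" using c unfolding e'_def by simp
    finally show "(\<Sum>k<n. norm (H (v k) - H (u k))) < e" .
  qed
qed

lemma ac_id: "abs_cont_on a b (\<lambda>x. complex_of_real x)"
  unfolding abs_cont_on_def
proof (intro allI impI)
  fix e :: real assume e: "e > 0"
  show "\<exists>d>0. \<forall>(n::nat) (u::nat \<Rightarrow> real) (v::nat \<Rightarrow> real).
        (\<forall>k<n. a \<le> u k \<and> u k \<le> v k \<and> v k \<le> b) \<longrightarrow>
        (\<forall>i<n. \<forall>j<n. i \<noteq> j \<longrightarrow> v i \<le> u j \<or> v j \<le> u i) \<longrightarrow>
        (\<Sum>k<n. v k - u k) < d \<longrightarrow> (\<Sum>k<n. norm (complex_of_real (v k) - complex_of_real (u k))) < e"
  proof (intro exI[of _ e] conjI allI impI)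
    fix n :: nat and u v :: "nat \<Rightarrow> real"
    assume r: "\<forall>k<n. a \<le> u k \<and> u k \<le> v k \<and> v k \<le> b" and s: "(\<Sum>k<n. v k - u k) < e"
    have "(\<Sum>k<n. norm (complex_of_real (v k) - complex_of_real (u k))) = (\<Sum>k<n. v k - u k)"
    proof (rule sum.cong)
      fix k assume "k \<in> {..<n}"
      then have "u k \<le> v k" using r by auto
      then show "norm (complex_of_real (v k) - complex_of_real (u k)) = v k - u k"
        by (metis abs_of_nonneg diff_ge_0_iff_ge norm_of_real of_real_diff)
    qed simp
    then show "(\<Sum>k<n. norm (complex_of_real (v k) - complex_of_real (u k))) < e" using s by simp
  qed (use e in auto)
qed

lemma ac_lipschitz:
  assumes "L \<ge> 0" "\<And>u v. a \<le> u \<Longrightarrow> u \<le> v \<Longrightarrow> v \<le> b \<Longrightarrow> norm (H v - H u) \<le> L * (v - u)"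
  shows "abs_cont_on a b H"
proof (rule ac_dom[OF ac_id ac_id assms(1) order_refl])
  fix u v :: real assume "a \<le> u" "u \<le> v" "v \<le> b"
  then show "norm (H v - H u) \<le> L * norm (complex_of_real v - complex_of_real u) + 0 * norm (complex_of_real v - complex_of_real u)"
    using assms(2)[of u v] by (simp flip: of_real_diff)
qed

lemma ac_const: "abs_cont_on a b (\<lambda>x. c)"
  by (rule ac_lipschitz[of 0]) auto

lemma ac_add:
  assumes "abs_cont_on a b F" "abs_cont_on a b G"
  shows "abs_cont_on a b (\<lambda>x. F x + G x)"
proof (rule ac_dom[OF assms, of 1 1])
  fix u v :: real
  have "F v + G v - (F u + G u) = (F v - F u) + (G v - G u)" by simp
  then show "norm (F v + G v - (F u + G u)) \<le> 1 * norm (F v - F u) + 1 * norm (G v - G u)"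
    by (metis mult_1 norm_triangle_ineq)
qed auto

lemma ac_scale:
  assumes "abs_cont_on a b F"
  shows "abs_cont_on a b (\<lambda>x. c * F x)"
proof (rule ac_dom[OF assms assms, of "norm c" 0])
  fix u v :: real
  show "norm (c * F v - c * F u) \<le> norm c * norm (F v - F u) + 0 * norm (F v - F u)"
    by (simp add: norm_mult flip: right_diff_distrib)
qed auto

lemma ac_diff:
  assumes "abs_cont_on a b F" "abs_cont_on a b G"
  shows "abs_cont_on a b (\<lambda>x. F x - G x)"
  using ac_add[OF assms(1) ac_scale[OF assms(2), of "-1"]] by simp

lemma ac_cnj:
  assumes "abs_cont_on a b F"
  shows "abs_cont_on a b (\<lambda>x. cnj (F x))"
proof (rule ac_dom[OF assms assms, of 1 0])
  fix u v :: real
  show "norm (cnj (F v) - cnj (F u)) \<le> 1 * norm (F v - F u) + 0 * norm (F v - F u)"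
    by (simp flip: complex_cnj_diff)
qed auto

lemma ac_sub:
  assumes "abs_cont_on a b F" "a \<le> a'" "b' \<le> b"
  shows "abs_cont_on a' b' F"
  unfolding abs_cont_on_def
proof (intro allI impI)
  fix e :: real assume e: "e > 0"
  obtain \<delta> where d: "\<delta> > 0" and D: "\<forall>(n::nat) (u::nat \<Rightarrow> real) (v::nat \<Rightarrow> real).
        (\<forall>k<n. a \<le> u k \<and> u k \<le> v k \<and> v k \<le> b) \<longrightarrow>
        (\<forall>i<n. \<forall>j<n. i \<noteq> j \<longrightarrow> v i \<le> u j \<or> v j \<le> u i) \<longrightarrow>
        (\<Sum>k<n. v k - u k) < \<delta> \<longrightarrow> (\<Sum>k<n. norm (F (v k) - F (u k))) < e"
    using assms(1) e unfolding abs_cont_on_def by blast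
  show "\<exists>d>0. \<forall>(n::nat) (u::nat \<Rightarrow> real) (v::nat \<Rightarrow> real).
        (\<forall>k<n. a' \<le> u k \<and> u k \<le> v k \<and> v k \<le> b') \<longrightarrow>
        (\<forall>i<n. \<forall>j<n. i \<noteq> j \<longrightarrow> v i \<le> u j \<or> v j \<le> u i) \<longrightarrow>
        (\<Sum>k<n. v k - u k) < d \<longrightarrow> (\<Sum>k<n. norm (F (v k) - F (u k))) < e"
  proof (intro exI[of _ \<delta>] conjI allI impI)
    fix n :: nat and u v :: "nat \<Rightarrow> real"
    assume r: "\<forall>k<n. a' \<le> u k \<and> u k \<le> v k \<and> v k \<le> b'"
      and no: "\<forall>i<n. \<forall>j<n. i \<noteq> j \<longrightarrow> v i \<le> u j \<or> v j \<le> u i"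
      and s: "(\<Sum>k<n. v k - u k) < \<delta>"
    have r': "\<forall>k<n. a \<le> u k \<and> u k \<le> v k \<and> v k \<le> b" using r assms(2,3) by force
    show "(\<Sum>k<n. norm (F (v k) - F (u k))) < e" using D r' no s by blast
  qed (use d in auto)
qed

lemma ac_cont:
  assumes F: "abs_cont_on a b F"
  shows "continuous_on {a..b} F"
  unfolding continuous_on_iff
proof (intro ballI allI impI)
  fix x e :: real assume x: "x \<in> {a..b}" and e: "e > 0"
  obtain d where d: "d > 0" and D: "\<forall>(n::nat) (u::nat \<Rightarrow> real) (v::nat \<Rightarrow> real).
        (\<forall>k<n. a \<le> u k \<and> u k \<le> v k \<and> v k \<le> b) \<longrightarrow>
        (\<forall>i<n. \<forall>j<n. i \<noteq> j \<longrightarrow> v i \<le> u j \<or> v j \<le> u i) \<longrightarrow>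
        (\<Sum>k<n. v k - u k) < d \<longrightarrow> (\<Sum>k<n. norm (F (v k) - F (u k))) < e"
    using F e unfolding abs_cont_on_def by blast
  show "\<exists>d>0. \<forall>x'\<in>{a..b}. dist x' x < d \<longrightarrow> dist (F x') (F x) < e"
  proof (intro exI[of _ d] conjI ballI impI)
    fix y assume y: "y \<in> {a..b}" and dy: "dist y x < d"
    define u where "u = (\<lambda>k::nat. min x y)"
    define v where "v = (\<lambda>k::nat. max x y)"
    have "(\<Sum>k<1. norm (F (v k) - F (u k))) < e"
      using D[rule_format, of 1 u v] x y dy d by (auto simp: u_def v_def dist_real_def)
    then have "norm (F (max x y) - F (min x y)) < e" by (simp add: u_def v_def)
    moreover have "dist (F y) (F x) = norm (F (max x y) - F (min x y))"
    proof (cases "x \<le> y")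
      case True then show ?thesis by (simp add: dist_norm max_def min_def)
    next
      case False then show ?thesis by (simp add: dist_norm max_def min_def norm_minus_commute[of "F x"])
    qed
    ultimately show "dist (F y) (F x) < e" by simp
  qed (use d in auto)
qed

lemma ac_bounded:
  assumes "abs_cont_on a b F"
  obtains B where "B \<ge> 0" "\<And>x. x \<in> {a..b} \<Longrightarrow> norm (F x) \<le> B"
proof -
  have "compact (F ` {a..b})" by (rule compact_continuous_image[OF ac_cont[OF assms]]) simp
  then obtain B where "B > 0" "\<forall>y\<in>F ` {a..b}. norm y \<le> B"
    using compact_imp_bounded bounded_pos by metis
  then show ?thesis using that[of B] by auto
qed

lemma ac_mult:
  assumes F: "abs_cont_on a b F" and G: "abs_cont_on a b G"
  shows "abs_cont_on a b (\<lambda>x. F x * G x)"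
proof -
  obtain BF where BF: "BF \<ge> 0" "\<And>x. x \<in> {a..b} \<Longrightarrow> norm (F x) \<le> BF" using ac_bounded[OF F] by blast
  obtain BG where BG: "BG \<ge> 0" "\<And>x. x \<in> {a..b} \<Longrightarrow> norm (G x) \<le> BG" using ac_bounded[OF G] by blast
  show ?thesis
  proof (rule ac_dom[OF F G BG(1) BF(1)])
    fix u v assume uv: "a \<le> u" "u \<le> v" "v \<le> b"
    have "F v * G v - F u * G u = G v * (F v - F u) + F u * (G v - G u)" by (simp add: algebra_simps)
    then have "norm (F v * G v - F u * G u) \<le> norm (G v * (F v - F u)) + norm (F u * (G v - G u))"
      using norm_triangle_ineq by metis
    then have "norm (F v * G v - F u * G u) \<le> norm (G v) * norm (F v - F u) + norm (F u) * norm (G v - G u)"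
      by (simp add: norm_mult)
    also have "\<dots> \<le> BG * norm (F v - F u) + BF * norm (G v - G u)"
      using uv BF BG by (intro add_mono mult_right_mono) auto
    finally show "norm (F v * G v - F u * G u) \<le> BG * norm (F v - F u) + BF * norm (G v - G u)" .
  qed
qed

lemma ac_reflect:
  assumes F: "abs_cont_on a b F"
  shows "abs_cont_on (-b) (-a) (\<lambda>x. F (- x))"
  unfolding abs_cont_on_def
proof (intro allI impI)
  fix e :: real assume e: "e > 0"
  obtain d where d: "d > 0" and D: "\<forall>(n::nat) (u::nat \<Rightarrow> real) (v::nat \<Rightarrow> real).
        (\<forall>k<n. a \<le> u k \<and> u k \<le> v k \<and> v k \<le> b) \<longrightarrow>
        (\<forall>i<n. \<forall>j<n. i \<noteq> j \<longrightarrow> v i \<le> u j \<or> v j \<le> u i) \<longrightarrow>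
        (\<Sum>k<n. v k - u k) < d \<longrightarrow> (\<Sum>k<n. norm (F (v k) - F (u k))) < e"
    using F e unfolding abs_cont_on_def by blast
  show "\<exists>d>0. \<forall>(n::nat) (u::nat \<Rightarrow> real) (v::nat \<Rightarrow> real).
        (\<forall>k<n. - b \<le> u k \<and> u k \<le> v k \<and> v k \<le> - a) \<longrightarrow>
        (\<forall>i<n. \<forall>j<n. i \<noteq> j \<longrightarrow> v i \<le> u j \<or> v j \<le> u i) \<longrightarrow>
        (\<Sum>k<n. v k - u k) < d \<longrightarrow> (\<Sum>k<n. norm (F (- v k) - F (- u k))) < e"
  proof (intro exI[of _ d] conjI allI impI)
    fix n :: nat and u v :: "nat \<Rightarrow> real"
    assume r: "\<forall>k<n. - b \<le> u k \<and> u k \<le> v k \<and> v k \<le> - a"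
      and no: "\<forall>i<n. \<forall>j<n. i \<noteq> j \<longrightarrow> v i \<le> u j \<or> v j \<le> u i"
      and s: "(\<Sum>k<n. v k - u k) < d"
    have r': "\<forall>k<n. a \<le> - v k \<and> - v k \<le> - u k \<and> - u k \<le> b" using r by force
    have no': "\<forall>i<n. \<forall>j<n. i \<noteq> j \<longrightarrow> - u i \<le> - v j \<or> - u j \<le> - v i" using no by force
    have s': "(\<Sum>k<n. - u k - - v k) < d" using s by (simp add: algebra_simps)
    have "(\<Sum>k<n. norm (F (- u k) - F (- v k))) < e"
      using D[rule_format, of n "\<lambda>k. - v k" "\<lambda>k. - u k"] r' no' s' by auto
    then show "(\<Sum>k<n. norm (F (- v k) - F (- u k))) < e" by (simp add: norm_minus_commute)
  qed (use d in auto)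
qed

lemma AE_Om_negl:
  assumes "AE x in Om. P x"
  obtains N where "negligible N" "\<And>x. x \<in> {-pi<..<pi} - N \<Longrightarrow> P x"
proof -
  have m: "{-pi<..<pi} \<inter> space lebesgue \<in> sets lebesgue" by simp
  have "AE x in lebesgue. x \<in> {-pi<..<pi} \<longrightarrow> P x"
    using assms unfolding Om_def AE_restrict_space_iff[OF m] .
  then obtain N where N: "{x \<in> space lebesgue. \<not> (x \<in> {-pi<..<pi} \<longrightarrow> P x)} \<subseteq> N" "emeasure lebesgue N = 0" "N \<in> sets lebesgue"
    by (rule AE_E)
  have "N \<in> null_sets lebesgue" using N(2,3) by (rule null_setsI)
  then have "negligible N" by (simp only: negligible_iff_null_sets)
  moreover have "\<And>x. x \<in> {-pi<..<pi} - N \<Longrightarrow> P x" using N(1) by auto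
  ultimately show ?thesis by (rule that)
qed

lemma negl_AE_on:
  assumes "negligible N" "S \<in> sets lebesgue" "\<And>x. x \<in> S - N \<Longrightarrow> P x"
  shows "AE x in lebesgue_on S. P x"
proof -
  have m: "S \<inter> space lebesgue \<in> sets lebesgue" using assms(2) by simp
  have nN: "N \<in> null_sets lebesgue" using assms(1) by (simp only: negligible_iff_null_sets)
  have "AE x in lebesgue. x \<in> S \<longrightarrow> P x"
    by (rule AE_I'[OF nN]) (use assms(3) in auto)
  then show ?thesis unfolding AE_restrict_space_iff[OF m] .
qed

lemma ac_deriv:
  fixes \<phi> \<phi>' :: "real \<Rightarrow> real"
  assumes der: "\<And>t. t \<in> {a..b} \<Longrightarrow> (\<phi> has_real_derivative \<phi>' t) (at t)"
    and cont: "continuous_on {a..b} \<phi>'"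
  shows "abs_cont_on a b (\<lambda>t. complex_of_real (\<phi> t))"
proof -
  have "compact (\<phi>' ` {a..b})" by (rule compact_continuous_image[OF cont]) simp
  then obtain L where L: "L > 0" "\<forall>y\<in>\<phi>' ` {a..b}. norm y \<le> L"
    using compact_imp_bounded bounded_pos by metis
  show ?thesis
  proof (rule ac_lipschitz[of L])
    show "L \<ge> 0" using L by simp
    fix u v assume uv: "a \<le> u" "u \<le> v" "v \<le> b"
    show "norm (complex_of_real (\<phi> v) - complex_of_real (\<phi> u)) \<le> L * (v - u)"
    proof (cases "u = v")
      case True then show ?thesis by simp
    next
      case False
      then have "u < v" using uv by simp
      have "\<exists>l z. u < z \<and> z < v \<and> DERIV \<phi> z :> l \<and> \<phi> v - \<phi> u = (v - u) * l"
      proof (rule MVT[OF \<open>u < v\<close>])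
        show "continuous_on {u..v} \<phi>"
          by (rule has_real_derivative_imp_continuous_on[where f'=\<phi>']) (use der uv in auto)
        show "\<phi> differentiable (at x)" if "u < x" "x < v" for x
          using der[of x] that uv real_differentiable_def by force
      qed
      then obtain l z where z: "u < z" "z < v" "DERIV \<phi> z :> l" "\<phi> v - \<phi> u = (v - u) * l" by blast
      have "l = \<phi>' z" using DERIV_unique[OF z(3) der[of z]] z uv by auto
      then have "\<bar>l\<bar> \<le> L" using L z uv by auto
      have "norm (complex_of_real (\<phi> v) - complex_of_real (\<phi> u)) = \<bar>\<phi> v - \<phi> u\<bar>"
        by (simp flip: of_real_diff)
      also have "\<dots> = (v - u) * \<bar>l\<bar>" using z(4) \<open>u < v\<close> by (simp add: abs_mult)
      also have "\<dots> \<le> (v - u) * L" using \<open>\<bar>l\<bar> \<le> L\<close> \<open>u < v\<close> by (intro mult_left_mono) auto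
      finally show ?thesis by (simp add: mult.commute)
    qed
  qed
qed

lemma sin_ge_half:
  assumes "0 \<le> x" "x \<le> pi/3"
  shows "x/2 \<le> sin x"
proof -
  have "(\<lambda>t. sin t - t/2) 0 \<le> (\<lambda>t. sin t - t/2) x"
  proof (rule DERIV_nonneg_imp_increasing_open[OF assms(1)])
    fix t assume t: "0 < t" "t < x"
    have "cos (pi/3) \<le> cos t"
      using t assms by (intro cos_monotone_0_pi_le) auto
    then have "cos t - 1/2 \<ge> 0" by (simp add: cos_60)
    moreover have "DERIV (\<lambda>t. sin t - t/2) t :> cos t - 1/2"
      by (auto intro!: derivative_eq_intros)
    ultimately show "\<exists>y. DERIV (\<lambda>t. sin t - t/2) t :> y \<and> 0 \<le> y" by blast
  qed (intro continuous_intros; simp)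
  then show ?thesis by simp
qed

lemma one_minus_cos_pos: "0 < t \<Longrightarrow> t < pi \<Longrightarrow> 0 < 1 - cos t"
  using cos_monotone_0_pi[of 0 t] by simp

definition wfun :: "real \<Rightarrow> real \<Rightarrow> real" where
  "wfun \<epsilon> t = exp (ln ((1 - cos t) / sin t) / \<epsilon>)"

lemma wfun_pos: "0 < wfun \<epsilon> t"
  by (simp add: wfun_def)

lemma wfun_deriv:
  assumes "0 < t" "t < pi" "\<epsilon> \<noteq> 0"
  shows "(wfun \<epsilon> has_real_derivative (wfun \<epsilon> t / (\<epsilon> * sin t))) (at t)"
proof -
  have s: "sin t > 0" using assms by (simp add: sin_gt_zero)
  have c: "1 - cos t > 0" using assms by (intro one_minus_cos_pos)
  have u: "(\<lambda>t. (1 - cos t) / sin t) t > 0" using s c by simp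
  have d1: "((\<lambda>t. (1 - cos t) / sin t) has_real_derivative ((1 - cos t) / (sin t)^2)) (at t)"
  proof -
    have "((\<lambda>t. (1 - cos t) / sin t) has_real_derivative
          ((sin t * sin t - (1 - cos t) * cos t) / (sin t * sin t))) (at t)"
      using s by (auto intro!: derivative_eq_intros)
    moreover have "(sin t * sin t - (1 - cos t) * cos t) = 1 - cos t"
      using sin_cos_squared_add[of t] by (simp add: power2_eq_square algebra_simps)
    ultimately show ?thesis by (simp add: power2_eq_square)
  qed
  have d2: "((\<lambda>t. ln ((1 - cos t) / sin t) / \<epsilon>) has_real_derivative (1 / (\<epsilon> * sin t))) (at t)"
  proof -
    have "((\<lambda>t. ln ((1 - cos t) / sin t) / \<epsilon>) has_real_derivative
         (inverse ((1 - cos t) / sin t) * ((1 - cos t) / (sin t)^2) / \<epsilon>)) (at t)"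
      by (rule DERIV_cdivide[OF DERIV_chain2[OF DERIV_ln[OF u] d1]])
    moreover have "inverse ((1 - cos t) / sin t) * ((1 - cos t) / (sin t)^2) / \<epsilon> = 1 / (\<epsilon> * sin t)"
      using s c assms(3) by (simp add: field_simps power2_eq_square)
    ultimately show ?thesis by simp
  qed
  have "(wfun \<epsilon> has_real_derivative (exp (ln ((1 - cos t) / sin t) / \<epsilon>) * (1 / (\<epsilon> * sin t)))) (at t)"
    unfolding wfun_def by (rule DERIV_chain2[OF DERIV_exp d2])
  then show ?thesis by (simp add: wfun_def)
qed

lemma wfun_deriv_pos:
  assumes "0 < t" "t < pi" "0 < \<epsilon>"
  shows "wfun \<epsilon> t / (\<epsilon> * sin t) > 0"
  using assms wfun_pos[of \<epsilon> t] sin_gt_zero[of t] by simp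

lemma wfun_mono:
  assumes "0 < s" "s \<le> t" "t < pi" "0 < \<epsilon>"
  shows "wfun \<epsilon> s \<le> wfun \<epsilon> t"
proof (cases "s = t")
  case False
  then have "s < t" using assms by simp
  have "wfun \<epsilon> s < wfun \<epsilon> t"
  proof (rule DERIV_pos_imp_increasing[OF \<open>s < t\<close>])
    fix x assume "s \<le> x" "x \<le> t"
    then show "\<exists>y. DERIV (wfun \<epsilon>) x :> y \<and> y > 0"
      using assms wfun_deriv[of x \<epsilon>] wfun_deriv_pos[of x \<epsilon>] by force
  qed
  then show ?thesis by simp
qed simp

lemma wfun_half: "wfun \<epsilon> (pi/2) = 1"
  by (simp add: wfun_def)

lemma wfun_le1:
  assumes "0 < t" "t \<le> pi/2" "0 < \<epsilon>"
  shows "wfun \<epsilon> t \<le> 1"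
  using wfun_mono[of t "pi/2" \<epsilon>] assms by (simp add: wfun_half)

lemma wfun_cont_deriv:
  assumes "0 < a" "b < pi" "0 < \<epsilon>"
  shows "continuous_on {a..b} (\<lambda>t. wfun \<epsilon> t / (\<epsilon> * sin t))"
proof -
  have "continuous_on {a..b} (wfun \<epsilon>)"
    by (rule has_real_derivative_imp_continuous_on[where f'="\<lambda>t. wfun \<epsilon> t / (\<epsilon> * sin t)"])
       (use assms wfun_deriv in auto)
  moreover have "\<forall>t\<in>{a..b}. \<epsilon> * sin t \<noteq> 0"
  proof
    fix t assume "t \<in> {a..b}"
    then have "0 < t" "t < pi" using assms by auto
    then show "\<epsilon> * sin t \<noteq> 0" using assms sin_gt_zero[of t] by simp
  qed
  ultimately show ?thesis by (intro continuous_intros) auto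
qed

lemma ac_wfun:
  assumes "0 < a" "b < pi" "0 < \<epsilon>"
  shows "abs_cont_on a b (\<lambda>t. complex_of_real (wfun \<epsilon> t))"
  by (rule ac_deriv[OF _ wfun_cont_deriv[OF assms]]) (use assms wfun_deriv in auto)

lemma ac_inv_sin:
  assumes "0 < a" "b < pi"
  shows "abs_cont_on a b (\<lambda>t. complex_of_real (1 / sin t))"
proof (rule ac_deriv)
  fix t assume t: "t \<in> {a..b}"
  then have "sin t > 0" using assms by (auto intro: sin_gt_zero)
  then show "((\<lambda>t. 1 / sin t) has_real_derivative (- cos t / (sin t)^2)) (at t)"
    by (auto intro!: derivative_eq_intros simp: power2_eq_square)
next
  have "\<forall>t\<in>{a..b}. sin t \<noteq> 0"
  proof
    fix t assume "t \<in> {a..b}"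
    then have "0 < t" "t < pi" using assms by auto
    then show "sin t \<noteq> 0" using sin_gt_zero[of t] by simp
  qed
  then show "continuous_on {a..b} (\<lambda>t. - cos t / (sin t)^2)"
    by (intro continuous_intros) auto
qed

locale core =
  fixes \<epsilon> :: real and p g q f Y :: "real \<Rightarrow> complex" and N :: "real set" and B M :: real
  assumes eps: "0 < \<epsilon>" "\<epsilon> < 2"
  and pac: "\<And>a b. 0 < a \<Longrightarrow> b < pi \<Longrightarrow> abs_cont_on a b p"
  and N: "negligible N"
  and eqs: "\<And>x. x \<in> {0<..<pi} - N \<Longrightarrow> p x = complex_of_real (sin x) * g x \<and>
               (p has_vector_derivative q x) (at x) \<and> f x = complex_of_real \<epsilon> * q x + g x"
  and fabs: "f absolutely_integrable_on {0..pi}"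
  and f2: "(\<lambda>x. norm (f x)^2) integrable_on {0..pi}"
  and M: "M = integral {0..pi} (\<lambda>x. norm (f x)^2)"
  and Yint: "\<And>s x. 0 < s \<Longrightarrow> s \<le> x \<Longrightarrow> x < pi \<Longrightarrow> (g has_integral (Y x - Y s)) {s..x}"
  and YB: "\<And>x. 0 < x \<Longrightarrow> x < pi \<Longrightarrow> norm (Y x) \<le> B"
begin

definition W where "W t = complex_of_real (wfun \<epsilon> t) * p t"
definition r where "r x = sqrt x * (M + 1) / (2 * \<epsilon>)"

lemma M_nonneg: "M \<ge> 0"
  unfolding M by (rule integral_nonneg[OF f2]) simp

lemma B_nonneg: "B \<ge> 0"
proof -
  have "norm (Y (pi/2)) \<le> B" using YB[of "pi/2"] pi_gt_zero by simp
  then show ?thesis using norm_ge_zero[of "Y (pi/2)"] by linarith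
qed

lemma r_nonneg: "0 \<le> x \<Longrightarrow> r x \<ge> 0"
  unfolding r_def using M_nonneg eps by simp

lemma Wint:
  assumes "0 < a" "a \<le> x" "x < pi"
  shows "((\<lambda>t. complex_of_real (wfun \<epsilon> t) * f t / complex_of_real \<epsilon>) has_integral (W x - W a)) {a..x}"
proof -
  have ac: "abs_cont_on a x W"
    unfolding W_def by (rule ac_mult[OF ac_wfun pac]) (use assms eps in auto)
  have "((\<lambda>t. complex_of_real (wfun \<epsilon> t) * f t / complex_of_real \<epsilon>) has_integral (W x - W a)) {a..x}"
  proof (rule ftc_ac[OF assms(2) ac N])
    fix t assume t: "t \<in> {a<..<x} - N"
    then have t0: "t \<in> {0<..<pi} - N" using assms by auto
    note e = eqs[OF t0]
    have s: "sin t > 0" using t0 by (auto intro: sin_gt_zero)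
    have dw: "((\<lambda>t. complex_of_real (wfun \<epsilon> t)) has_vector_derivative
              complex_of_real (wfun \<epsilon> t / (\<epsilon> * sin t))) (at t)"
      by (rule has_vector_derivative_of_real[OF wfun_deriv]) (use t0 eps in auto)
    have "(W has_vector_derivative (complex_of_real (wfun \<epsilon> t) * q t + complex_of_real (wfun \<epsilon> t / (\<epsilon> * sin t)) * p t)) (at t)"
      unfolding W_def by (rule has_vector_derivative_mult[OF dw]) (use e in blast)
    moreover have "complex_of_real (wfun \<epsilon> t) * q t + complex_of_real (wfun \<epsilon> t / (\<epsilon> * sin t)) * p t
        = complex_of_real (wfun \<epsilon> t) * f t / complex_of_real \<epsilon>"
    proof -
      have "complex_of_real (wfun \<epsilon> t / (\<epsilon> * sin t)) * p t = complex_of_real (wfun \<epsilon> t) * g t / complex_of_real \<epsilon>"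
        using e s eps by (simp add: field_simps)
      then show ?thesis using e eps by (simp add: field_simps)
    qed
    ultimately show "(W has_vector_derivative complex_of_real (wfun \<epsilon> t) * f t / complex_of_real \<epsilon>) (at t)"
      by simp
  qed
  then show ?thesis .
qed

lemma fnorm_int: "{a..b} \<subseteq> {0..pi} \<Longrightarrow> (\<lambda>t. norm (f t)) integrable_on {a..b}"
  using absolutely_integrable_norm[OF absolutely_integrable_on_subinterval[OF fabs]]
  by (simp add: o_def absolutely_integrable_on_def)

lemma f2_int: "{a..b} \<subseteq> {0..pi} \<Longrightarrow> (\<lambda>t. norm (f t)^2) integrable_on {a..b}"
  using integrable_on_subinterval[OF f2] by blast

lemma f2_le_M: "{a..b} \<subseteq> {0..pi} \<Longrightarrow> integral {a..b} (\<lambda>t. norm (f t)^2) \<le> M"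
  unfolding M by (rule integral_subset_le) (use f2_int f2 in auto)

lemma fnorm_bound:
  assumes "0 < a" "a \<le> x" "x \<le> pi"
  shows "integral {a..x} (\<lambda>t. norm (f t)) \<le> sqrt x * (M + 1) / 2"
proof -
  have sub: "{a..x} \<subseteq> {0..pi}" using assms by auto
  have sx: "sqrt x > 0" using assms by simp
  have pw: "norm (f t) \<le> (sqrt x * norm (f t)^2 + 1 / sqrt x) / 2" for t
  proof -
    have "0 \<le> (sqrt x * norm (f t) - 1)^2" by simp
    then have "2 * (sqrt x * norm (f t)) \<le> (sqrt x * norm (f t))^2 + 1"
      by (simp add: power2_eq_square algebra_simps)
    then have "2 * (sqrt x * norm (f t)) \<le> sqrt x * (sqrt x * norm (f t)^2 + 1 / sqrt x)"
      using sx by (simp add: power2_eq_square algebra_simps)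
    then show ?thesis using sx by (simp add: field_simps)
  qed
  define I2 where "I2 = integral {a..x} (\<lambda>t. norm (f t)^2)"
  have h2: "((\<lambda>t. norm (f t)^2) has_integral I2) {a..x}" unfolding I2_def using f2_int[OF sub] by blast
  have h3: "((\<lambda>t. (sqrt x * norm (f t)^2 + 1 / sqrt x) / 2) has_integral
             (sqrt x * I2 + Henstock_Kurzweil_Integration.content {a..x} *\<^sub>R (1 / sqrt x)) / 2) {a..x}"
    by (intro has_integral_divide has_integral_add has_integral_mult_right h2 has_integral_const_real)
  have hf: "((\<lambda>t. norm (f t)) has_integral (integral {a..x} (\<lambda>t. norm (f t)))) {a..x}"
    using fnorm_int[OF sub] by blast
  have "integral {a..x} (\<lambda>t. norm (f t)) \<le> (sqrt x * I2 + Henstock_Kurzweil_Integration.content {a..x} *\<^sub>R (1 / sqrt x)) / 2"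
    by (rule has_integral_le[OF hf h3]) (use pw in auto)
  also have "\<dots> = (sqrt x * integral {a..x} (\<lambda>t. norm (f t)^2) + (x - a) / sqrt x) / 2"
    using assms by (simp add: I2_def)
  also have "\<dots> \<le> (sqrt x * M + sqrt x) / 2"
  proof -
    have "sqrt x * integral {a..x} (\<lambda>t. norm (f t)^2) \<le> sqrt x * M"
      using f2_le_M[OF sub] sx by (intro mult_left_mono) auto
    moreover have "(x - a) / sqrt x \<le> sqrt x"
    proof -
      have "(x - a) / sqrt x \<le> x / sqrt x" using assms sx by (intro divide_right_mono) auto
      also have "\<dots> = sqrt x" using assms by (metis real_div_sqrt less_imp_le order_less_le_trans)
      finally show ?thesis .
    qed
    ultimately show ?thesis by (simp only: divide_right_mono add_mono)
  qed
  finally show ?thesis by (simp add: algebra_simps)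
qed


lemma Wbound:
  assumes "0 < a" "a \<le> x" "x \<le> pi/3"
  shows "norm (W x - W a) \<le> wfun \<epsilon> x * r x"
proof -
  have xp: "x < pi" using assms pi_gt_zero by linarith
  have sub: "{a..x} \<subseteq> {0..pi}" using assms xp by auto
  have hi: "((\<lambda>t. complex_of_real (wfun \<epsilon> t) * f t / complex_of_real \<epsilon>) has_integral (W x - W a)) {a..x}"
    by (rule Wint[OF assms(1,2) xp])
  have hf: "((\<lambda>t. norm (f t)) has_integral (integral {a..x} (\<lambda>t. norm (f t)))) {a..x}"
    using fnorm_int[OF sub] by blast
  have hg: "((\<lambda>t. (wfun \<epsilon> x / \<epsilon>) * norm (f t)) has_integral ((wfun \<epsilon> x / \<epsilon>) * integral {a..x} (\<lambda>t. norm (f t)))) {a..x}"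
    by (rule has_integral_mult_right[OF hf])
  have iu: "integral {a..x} (\<lambda>t. complex_of_real (wfun \<epsilon> t) * f t / complex_of_real \<epsilon>) = W x - W a"
    by (rule integral_unique[OF hi])
  have "norm (W x - W a) = norm (integral {a..x} (\<lambda>t. complex_of_real (wfun \<epsilon> t) * f t / complex_of_real \<epsilon>))"
    by (simp only: iu)
  also have "\<dots> \<le> integral {a..x} (\<lambda>t. (wfun \<epsilon> x / \<epsilon>) * norm (f t))"
  proof (rule integral_norm_bound_integral)
    show "(\<lambda>t. complex_of_real (wfun \<epsilon> t) * f t / complex_of_real \<epsilon>) integrable_on {a..x}" using hi by blast
    show "(\<lambda>t. (wfun \<epsilon> x / \<epsilon>) * norm (f t)) integrable_on {a..x}" using hg by blast
    fix t assume t: "t \<in> {a..x}"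
    have "wfun \<epsilon> t \<le> wfun \<epsilon> x" using t assms xp eps by (intro wfun_mono) auto
    then have "wfun \<epsilon> t * norm (f t) / \<epsilon> \<le> wfun \<epsilon> x * norm (f t) / \<epsilon>"
      using eps by (intro divide_right_mono mult_right_mono) auto
    then show "norm (complex_of_real (wfun \<epsilon> t) * f t / complex_of_real \<epsilon>) \<le> (wfun \<epsilon> x / \<epsilon>) * norm (f t)"
      using eps wfun_pos[of \<epsilon> t] by (simp add: norm_mult norm_divide)
  qed
  also have "\<dots> = (wfun \<epsilon> x / \<epsilon>) * integral {a..x} (\<lambda>t. norm (f t))"
    using hg by (simp add: integral_unique)
  also have "\<dots> \<le> (wfun \<epsilon> x / \<epsilon>) * (sqrt x * (M + 1) / 2)"
    using fnorm_bound[OF assms(1,2)] xp eps wfun_pos[of \<epsilon> x] by (intro mult_left_mono) auto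
  also have "\<dots> = wfun \<epsilon> x * r x" by (simp add: r_def)
  finally show ?thesis .
qed

lemma pbound:
  assumes x0: "0 < x" and x3: "x \<le> pi/3"
  shows "norm (p x) \<le> 2 * r x"
proof (rule ccontr)
  assume "\<not> ?thesis"
  then have big: "norm (p x) > 2 * r x" by simp
  have xp: "x < pi" using x3 pi_gt_zero by linarith
  define c where "c = W x"
  have wx: "0 < wfun \<epsilon> x" by (rule wfun_pos)
  have nc: "norm c = wfun \<epsilon> x * norm (p x)"
    unfolding c_def W_def using wx by (simp add: norm_mult)
  have cbig: "norm c > 2 * (wfun \<epsilon> x * r x)"
    using big wx unfolding nc by simp
  have cpos: "norm c > 0" using cbig r_nonneg[of x] x0 wx by (smt (verit) mult_nonneg_nonneg)
  have Re_lb: "Re (cnj c * W a) \<ge> norm c ^ 2 / 2" if a: "0 < a" "a \<le> x" for a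
  proof -
    have d: "norm (W a - c) \<le> wfun \<epsilon> x * r x"
      using Wbound[OF a x3] by (simp add: c_def norm_minus_commute)
    have "cnj c * W a = cnj c * c + cnj c * (W a - c)" by (simp add: algebra_simps)
    moreover have "cnj c * c = complex_of_real (norm c ^ 2)"
      using complex_norm_square[of c] by (simp add: mult.commute)
    ultimately have "Re (cnj c * W a) = norm c ^ 2 + Re (cnj c * (W a - c))"
      by simp
    moreover have "Re (cnj c * (W a - c)) \<ge> - (norm c * (wfun \<epsilon> x * r x))"
    proof -
      have "\<bar>Re (cnj c * (W a - c))\<bar> \<le> norm (cnj c * (W a - c))" by (rule abs_Re_le_cmod)
      also have "\<dots> = norm c * norm (W a - c)" by (simp add: norm_mult)
      also have "\<dots> \<le> norm c * (wfun \<epsilon> x * r x)" using d by (intro mult_left_mono) auto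
      finally show ?thesis by linarith
    qed
    moreover have "norm c * (wfun \<epsilon> x * r x) \<le> norm c ^ 2 / 2"
      using cbig cpos by (simp add: power2_eq_square)
    ultimately show ?thesis by linarith
  qed
  have g_lb: "Re (cnj c * g a) \<ge> (norm c ^ 2 / 2) / a" if a: "a \<in> {0<..<x} - N" for a
  proof -
    have a0: "a \<in> {0<..<pi} - N" using a xp by auto
    have sa: "sin a > 0" using a0 by (auto intro: sin_gt_zero)
    have wa: "wfun \<epsilon> a > 0" by (rule wfun_pos)
    have pa: "p a = complex_of_real (sin a) * g a" using eqs[OF a0] by blast
    have ga: "g a = W a / complex_of_real (wfun \<epsilon> a * sin a)"
      using pa sa wa by (simp add: W_def field_simps)
    have "Re (cnj c * g a) = Re (cnj c * W a) / (wfun \<epsilon> a * sin a)"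
      unfolding ga by (simp add: add_divide_distrib)
    also have "\<dots> \<ge> (norm c ^ 2 / 2) / (wfun \<epsilon> a * sin a)"
      using Re_lb[of a] a sa wa by (intro divide_right_mono) auto
    moreover have "(norm c ^ 2 / 2) / (wfun \<epsilon> a * sin a) \<ge> (norm c ^ 2 / 2) / a"
    proof (rule divide_left_mono)
      have "wfun \<epsilon> a \<le> 1" using a x3 eps by (intro wfun_le1) auto
      moreover have "sin a \<le> a" using a by (intro sin_x_le_x) auto
      ultimately show "wfun \<epsilon> a * sin a \<le> a" using sa wa
        by (metis mult_le_one mult.commute mult_right_le_one_le less_imp_le order_trans mult_left_le_one_le)
      show "0 \<le> norm c ^ 2 / 2" by simp
      show "0 < a * (wfun \<epsilon> a * sin a)" using a sa wa by simp
    qed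
    ultimately show ?thesis by linarith
  qed
  define K where "K = 4 * B / norm c + 1"
  define s where "s = x * exp (- K)"
  have s0: "0 < s" using x0 by (simp add: s_def)
  have "4 * B / norm c \<ge> 0" using B_nonneg cpos by simp
  then have Kpos: "K > 0" by (simp add: K_def)
  have sx: "s < x" using x0 Kpos by (simp add: s_def)
  have lns: "ln x - ln s = K" using x0 by (simp add: s_def ln_mult)
  have Yi: "(g has_integral (Y x - Y s)) {s..x}" by (rule Yint[OF s0]) (use sx xp in auto)
  have bl: "bounded_linear (\<lambda>z. Re (cnj c * z))"
    by (rule bounded_linear_compose[OF bounded_linear_Re bounded_linear_mult_right])
  have hR: "((\<lambda>t. Re (cnj c * g t)) has_integral Re (cnj c * (Y x - Y s))) {s..x}"
    using has_integral_linear[OF Yi bl] by (simp add: o_def)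
  define C where "C = norm c ^ 2 / 2"
  have hL: "((\<lambda>t. C / t) has_integral (C * ln x - C * ln s)) {s..x}"
  proof -
    have "((\<lambda>t. C * inverse t) has_integral (C * ln x - C * ln s)) {s..x}"
    proof (rule fundamental_theorem_of_calculus)
      show "s \<le> x" using sx by simp
      fix t assume t: "t \<in> {s..x}"
      then have "t > 0" using s0 by auto
      then have "((\<lambda>t. C * ln t) has_real_derivative C * inverse t) (at t)"
        by (auto intro!: derivative_eq_intros simp: divide_inverse)
      then show "((\<lambda>t. C * ln t) has_vector_derivative C * inverse t) (at t within {s..x})"
        by (simp add: has_real_derivative_iff_has_vector_derivative has_vector_derivative_at_within)
    qed
    then show ?thesis by (simp add: divide_inverse)
  qed
  define \<phi> where "\<phi> t = (if t \<in> N \<union> {x} then C / t else Re (cnj c * g t))" for t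
  have hphi: "(\<phi> has_integral Re (cnj c * (Y x - Y s))) {s..x}"
    by (rule has_integral_spike[OF _ _ hR, of "N \<union> {x}"]) (use N in \<open>auto simp: \<phi>_def negligible_insert\<close>)
  have "C * ln x - C * ln s \<le> Re (cnj c * (Y x - Y s))"
  proof (rule has_integral_le[OF hL hphi])
    fix t assume t: "t \<in> {s..x}"
    show "C / t \<le> \<phi> t"
    proof (cases "t \<in> N \<union> {x}")
      case True then show ?thesis by (simp add: \<phi>_def)
    next
      case False
      then have "t \<in> {0<..<x} - N" using t s0 by auto
      then show ?thesis using g_lb False by (simp add: \<phi>_def C_def)
    qed
  qed
  also have "\<dots> \<le> norm (cnj c * (Y x - Y s))" using abs_Re_le_cmod by (metis abs_le_iff)
  also have "\<dots> = norm c * norm (Y x - Y s)" by (simp add: norm_mult)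
  also have "\<dots> \<le> norm c * (2 * B)"
  proof (rule mult_left_mono)
    have "norm (Y x - Y s) \<le> norm (Y x) + norm (Y s)" by (rule norm_triangle_ineq4)
    also have "\<dots> \<le> B + B" using YB[of x] YB[of s] x0 xp s0 sx by (intro add_mono) auto
    finally show "norm (Y x - Y s) \<le> 2 * B" by simp
  qed simp
  finally have "C * K \<le> norm c * (2 * B)" using lns by (simp add: algebra_simps)
  then have "norm c ^ 2 * K \<le> norm c * (4 * B)" by (simp add: C_def)
  then have "norm c * K \<le> 4 * B" using cpos by (simp add: power2_eq_square)
  then have "K \<le> 4 * B / norm c" using cpos by (simp add: field_simps)
  then show False by (simp add: K_def)
qed

lemma Fbound:
  assumes "0 < x" "x \<le> pi/3"
  shows "norm (p x)^2 / sin x \<le> 2 * ((M + 1) / \<epsilon>)^2"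
proof -
  have s: "x/2 \<le> sin x" using assms by (intro sin_ge_half) auto
  have sp: "sin x > 0" using assms s by simp
  have "norm (p x)^2 \<le> (2 * r x)^2"
    using pbound[OF assms] by (intro power_mono) auto
  also have "\<dots> = (sqrt x * ((M + 1) / \<epsilon>))^2"
  proof -
    have "2 * r x = sqrt x * ((M + 1) / \<epsilon>)" using eps by (simp add: r_def)
    then show ?thesis by simp
  qed
  also have "\<dots> = (sqrt x)^2 * ((M + 1) / \<epsilon>)^2" by (simp only: power_mult_distrib)
  also have "\<dots> = x * ((M + 1) / \<epsilon>)^2" using assms by simp
  finally have "norm (p x)^2 / sin x \<le> x * ((M + 1) / \<epsilon>)^2 / sin x"
    using sp by (intro divide_right_mono) auto
  also have "\<dots> \<le> x * ((M + 1) / \<epsilon>)^2 / (x/2)"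
    using s assms by (intro divide_left_mono) auto
  also have "\<dots> = 2 * ((M + 1) / \<epsilon>)^2" using assms by simp
  finally show ?thesis .
qed

end

lemma ReE_identity:
  fixes P Q G Fv :: complex and s c e :: real
  assumes s: "s > 0" and e: "e > 0" and P: "P = of_real s * G" and Fv: "Fv = of_real e * Q + G"
  shows "Re (cnj P * P * of_real (- c / s^2) + (cnj P * Q + cnj Q * P) * of_real (1/s))
       = (2/e) * (Re (cnj G * Fv) - norm G^2) - c * norm G^2"
proof -
  have Q: "Q = (Fv - G) / of_real e" using Fv e by (simp add: field_simps)
  show ?thesis unfolding Q P cmod_power2 using s e
    by (simp add: cmod_power2 power2_eq_square field_simps)
qed

lemma energy_pw:
  fixes G Fv :: complex and c e R :: real
  assumes e: "0 < e" "e < 2" and c: "c \<ge> -1"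
    and R: "R = (2/e) * (Re (cnj G * Fv) - norm G^2) - c * norm G^2"
  shows "(1 - e/2)/2 * norm G^2 \<le> norm Fv^2 / (2*(1 - e/2)) - (e/2) * R"
proof -
  define k where "k = 1 - e/2"
  have k: "k > 0" using e by (simp add: k_def)
  define X where "X = Re (cnj G * Fv)"
  have X1: "X \<le> norm G * norm Fv"
    using abs_Re_le_cmod[of "cnj G * Fv"] by (simp add: X_def norm_mult)
  have X2: "norm G * norm Fv \<le> k/2 * norm G^2 + norm Fv^2 / (2*k)"
  proof -
    have "0 \<le> (k * norm G - norm Fv)^2" by simp
    then have "2 * k * (norm G * norm Fv) \<le> k^2 * norm G^2 + norm Fv^2"
      by (simp add: power2_eq_square algebra_simps)
    then have "(2 * k * (norm G * norm Fv)) / (2*k) \<le> (k^2 * norm G^2 + norm Fv^2) / (2*k)"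
      using k by (intro divide_right_mono) auto
    then show ?thesis using k by (simp add: power2_eq_square field_simps)
  qed
  have eR: "(e/2) * R = X - norm G^2 - (e * c / 2) * norm G^2"
    unfolding R X_def using e by (simp add: field_simps)
  have "- (e * c / 2) * norm G^2 \<le> (e/2) * norm G^2"
  proof -
    have "e * (- c) \<le> e * 1" using c e by (intro mult_left_mono) auto
    then have "- (e * c / 2) \<le> e / 2" by simp
    then show ?thesis by (intro mult_right_mono) auto
  qed
  then have "(e/2) * R \<le> k/2 * norm G^2 + norm Fv^2 / (2*k) - norm G^2 + (e/2) * norm G^2"
    using eR X1 X2 by linarith
  also have "\<dots> = norm Fv^2 / (2*k) - k/2 * norm G^2" by (simp add: k_def field_simps)
  finally show ?thesis by (simp add: k_def)
qed

context core
begin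

definition G where "G t = p t / complex_of_real (sin t)"

lemma G_cont: "0 < a \<Longrightarrow> b < pi \<Longrightarrow> continuous_on {a..b} G"
proof -
  assume ab: "0 < a" "b < pi"
  have "continuous_on {a..b} p" by (rule ac_cont[OF pac[OF ab]])
  moreover have "\<forall>t\<in>{a..b}. complex_of_real (sin t) \<noteq> 0"
  proof
    fix t assume "t \<in> {a..b}"
    then have "0 < t" "t < pi" using ab by auto
    then show "complex_of_real (sin t) \<noteq> 0" using sin_gt_zero[of t] by simp
  qed
  ultimately show ?thesis unfolding G_def by (intro continuous_intros) auto
qed

lemma G2_int: "0 < a \<Longrightarrow> b < pi \<Longrightarrow> (\<lambda>t. norm (G t)^2) integrable_on {a..b}"
  by (intro integrable_continuous_interval continuous_intros G_cont)

lemma g_eq_G: "t \<in> {0<..<pi} - N \<Longrightarrow> g t = G t"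
proof -
  assume t: "t \<in> {0<..<pi} - N"
  then have "sin t > 0" by (auto intro: sin_gt_zero)
  then show "g t = G t" using eqs[OF t] by (simp add: G_def)
qed

definition k where "k = 1 - \<epsilon>/2"

lemma k_pos: "k > 0" using eps by (simp add: k_def)

lemma energy:
  assumes ab: "0 < a" "a \<le> b" "b < pi"
  shows "integral {a..b} (\<lambda>t. norm (G t)^2) \<le> M / k^2 + \<epsilon> * (norm (p a)^2 / sin a) / k"
proof -
  define E where "E t = cnj (p t) * p t * complex_of_real (1 / sin t)" for t
  define E' where "E' t = cnj (p t) * p t * complex_of_real (- cos t / (sin t)^2) + (cnj (p t) * q t + cnj (q t) * p t) * complex_of_real (1 / sin t)" for t
  have ac: "abs_cont_on a b E"
    unfolding E_def
    by (intro ac_mult ac_cnj pac ac_inv_sin) (use ab in auto)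
  have hE: "(E' has_integral (E b - E a)) {a..b}"
  proof (rule ftc_ac[OF ab(2) ac N])
    fix t assume t: "t \<in> {a<..<b} - N"
    then have t0: "t \<in> {0<..<pi} - N" using ab by auto
    have s: "sin t > 0" using t0 by (auto intro: sin_gt_zero)
    have dp: "(p has_vector_derivative q t) (at t)" using eqs[OF t0] by blast
    have d1: "((\<lambda>t. cnj (p t) * p t) has_vector_derivative (cnj (p t) * q t + cnj (q t) * p t)) (at t)"
      by (rule has_vector_derivative_mult[OF has_vector_derivative_cnj[OF dp] dp])
    have ds: "((\<lambda>t. 1 / sin t) has_real_derivative (- cos t / (sin t)^2)) (at t)"
      using s by (auto intro!: derivative_eq_intros simp: power2_eq_square)
    have d2: "((\<lambda>t. complex_of_real (1 / sin t)) has_vector_derivative complex_of_real (- cos t / (sin t)^2)) (at t)"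
      by (rule has_vector_derivative_of_real[OF ds])
    show "(E has_vector_derivative E' t) (at t)"
      unfolding E_def E'_def by (rule has_vector_derivative_mult[OF d1 d2])
  qed
  have hR: "((\<lambda>t. Re (E' t)) has_integral Re (E b - E a)) {a..b}"
    using has_integral_linear[OF hE bounded_linear_Re] by (simp add: o_def)
  have ReE: "Re (E t) = norm (p t)^2 / sin t" for t
  proof -
    have "cnj (p t) * p t = complex_of_real (norm (p t)^2)"
      using complex_norm_square[of "p t"] by (simp add: mult.commute)
    then show ?thesis by (simp add: E_def)
  qed
  define I where "I = integral {a..b} (\<lambda>t. norm (G t)^2)"
  have hG: "((\<lambda>t. k/2 * norm (G t)^2) has_integral (k/2 * I)) {a..b}"
    unfolding I_def by (intro has_integral_mult_right integrable_integral G2_int) (use ab in auto)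
  have sub: "{a..b} \<subseteq> {0..pi}" using ab by auto
  define J where "J = integral {a..b} (\<lambda>t. norm (f t)^2)"
  have hF: "((\<lambda>t. norm (f t)^2 / (2*k) - (\<epsilon>/2) * Re (E' t)) has_integral
             (J / (2*k) - (\<epsilon>/2) * Re (E b - E a))) {a..b}"
    unfolding J_def
    by (intro has_integral_diff has_integral_divide has_integral_mult_right integrable_integral f2_int[OF sub] hR)
  define \<rho> where "\<rho> t = (if t \<in> N \<union> {a,b} then k/2 * norm (G t)^2 else norm (f t)^2 / (2*k) - (\<epsilon>/2) * Re (E' t))" for t
  have hrho: "(\<rho> has_integral (J / (2*k) - (\<epsilon>/2) * Re (E b - E a))) {a..b}"
    by (rule has_integral_spike[OF _ _ hF, of "N \<union> {a,b}"]) (use N in \<open>auto simp: \<rho>_def negligible_insert\<close>)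
  have "k/2 * I \<le> J / (2*k) - (\<epsilon>/2) * Re (E b - E a)"
  proof (rule has_integral_le[OF hG hrho])
    fix t assume t: "t \<in> {a..b}"
    show "k/2 * norm (G t)^2 \<le> \<rho> t"
    proof (cases "t \<in> N \<union> {a,b}")
      case True then show ?thesis by (simp add: \<rho>_def)
    next
      case False
      then have t0: "t \<in> {0<..<pi} - N" using t ab by auto
      have s: "sin t > 0" using t0 by (auto intro: sin_gt_zero)
      note e = eqs[OF t0]
      have gG: "g t = G t" by (rule g_eq_G[OF t0])
      have R: "Re (E' t) = (2/\<epsilon>) * (Re (cnj (g t) * f t) - norm (g t)^2) - cos t * norm (g t)^2"
        unfolding E'_def by (rule ReE_identity[OF s eps(1)]) (use e in auto)
      have "(1 - \<epsilon>/2)/2 * norm (g t)^2 \<le> norm (f t)^2 / (2*(1 - \<epsilon>/2)) - (\<epsilon>/2) * Re (E' t)"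
        by (rule energy_pw[OF eps _ R]) simp
      then show ?thesis using False by (simp add: \<rho>_def k_def gG)
    qed
  qed
  also have "\<dots> \<le> M / (2*k) + (\<epsilon>/2) * (norm (p a)^2 / sin a)"
  proof -
    have "J \<le> M" unfolding J_def by (rule f2_le_M[OF sub])
    then have "J / (2*k) \<le> M / (2*k)" using k_pos by (intro divide_right_mono) auto
    moreover have "Re (E b) \<ge> 0"
    proof -
      have "sin b > 0" using ab by (intro sin_gt_zero) auto
      then show ?thesis unfolding ReE by simp
    qed
    moreover have "(\<epsilon>/2) * Re (E b - E a) = (\<epsilon>/2) * Re (E b) - (\<epsilon>/2) * Re (E a)"
      by (simp add: algebra_simps)
    moreover have "(\<epsilon>/2) * Re (E b) \<ge> 0" using eps \<open>Re (E b) \<ge> 0\<close> by simp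
    ultimately show ?thesis unfolding ReE[symmetric] by linarith
  qed
  finally have "k/2 * I \<le> M / (2*k) + (\<epsilon>/2) * (norm (p a)^2 / sin a)" .
  then have "I \<le> (M / (2*k) + (\<epsilon>/2) * (norm (p a)^2 / sin a)) / (k/2)"
    using k_pos by (simp add: field_simps)
  also have "\<dots> = M / k^2 + \<epsilon> * (norm (p a)^2 / sin a) / k"
    using k_pos by (simp add: field_simps power2_eq_square)
  finally show ?thesis unfolding I_def .
qed


lemma g2_int: "(\<lambda>t. norm (g t)^2) integrable_on {0..pi}"
proof -
  define a where "a n = pi / (3 * (real n + 1))" for n :: nat
  define b where "b n = pi - a n" for n
  have a_pos: "0 < a n" for n by (simp add: a_def)
  have a_le: "a n \<le> pi/3" for n
  proof -
    have "pi / (3 * (real n + 1)) \<le> pi / (3 * 1)" using pi_gt_zero by (intro divide_left_mono) auto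
    then show ?thesis by (simp add: a_def)
  qed
  have b_lt: "b n < pi" for n using a_pos[of n] by (simp add: b_def)
  have ab: "a n \<le> b n" for n using a_le[of n] a_pos[of n] by (simp add: b_def)
  have a_mono: "a (Suc n) \<le> a n" for n
    unfolding a_def using pi_gt_zero by (intro divide_left_mono) auto
  define h where "h n t = (if t \<in> {a n..b n} then norm (G t)^2 else 0)" for n t
  define \<Phi> where "\<Phi> t = (if t \<in> {0<..<pi} then norm (G t)^2 else 0)" for t
  have sub_n: "{a n..b n} \<inter> {0..pi} = {a n..b n}" for n using a_pos[of n] b_lt[of n] by auto
  have hint: "h n integrable_on {0..pi}" for n
    unfolding h_def integrable_restrict_Int sub_n using G2_int[OF a_pos b_lt] by blast
  have hmono: "h n t \<le> h (Suc n) t" if "t \<in> {0..pi}" for n t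
  proof (cases "t \<in> {a n..b n}")
    case True
    then have "t \<in> {a (Suc n)..b (Suc n)}" using a_mono[of n] by (auto simp: b_def)
    then show ?thesis using True by (simp add: h_def)
  next
    case False
    then have "h n t = 0" unfolding h_def by (rule if_not_P)
    moreover have "h (Suc n) t \<ge> 0" by (simp add: h_def)
    ultimately show ?thesis by simp
  qed
  have hlim: "(\<lambda>n. h n t) \<longlonglongrightarrow> \<Phi> t" if t: "t \<in> {0..pi}" for t
  proof (cases "t \<in> {0<..<pi}")
    case True
    define m where "m = min t (pi - t)"
    have m: "m > 0" using True by (simp add: m_def)
    obtain Nn :: nat where Nn: "pi / (3 * m) < real Nn" using reals_Archimedean2 by blast
    have "eventually (\<lambda>n. h n t = \<Phi> t) sequentially"
    proof (rule eventually_sequentiallyI[of Nn])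
      fix n assume n: "Nn \<le> n"
      have "pi / (3 * m) < real n + 1" using Nn n by linarith
      then have "pi < (real n + 1) * (3 * m)" using m by (simp add: field_simps)
      then have "a n < m" unfolding a_def using m by (simp add: field_simps)
      then have "t \<in> {a n..b n}" unfolding b_def m_def by auto
      then show "h n t = \<Phi> t" using True by (simp add: h_def \<Phi>_def)
    qed
    then show ?thesis by (rule tendsto_eventually)
  next
    case False
    then have "t = 0 \<or> t = pi" using t by auto
    then have "h n t = 0" for n using a_pos[of n] b_lt[of n] by (auto simp: h_def)
    moreover have "\<Phi> t = 0" unfolding \<Phi>_def using False by (rule if_not_P)
    ultimately show ?thesis by simp
  qed
  define C where "C = M / k^2 + \<epsilon> * (2 * ((M + 1) / \<epsilon>)^2) / k"
  have ib: "integral {0..pi} (h n) \<le> C" for n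
  proof -
    have "integral {0..pi} (h n) = integral {a n..b n} (\<lambda>t. norm (G t)^2)"
      unfolding h_def integral_restrict_Int sub_n ..
    also have "\<dots> \<le> M / k^2 + \<epsilon> * (norm (p (a n))^2 / sin (a n)) / k"
      by (rule energy[OF a_pos ab b_lt])
    also have "\<dots> \<le> C"
    proof -
      have "norm (p (a n))^2 / sin (a n) \<le> 2 * ((M + 1) / \<epsilon>)^2" by (rule Fbound[OF a_pos a_le])
      then have "\<epsilon> * (norm (p (a n))^2 / sin (a n)) / k \<le> \<epsilon> * (2 * ((M + 1) / \<epsilon>)^2) / k"
        using eps k_pos by (intro divide_right_mono mult_left_mono) auto
      then show ?thesis by (simp add: C_def)
    qed
    finally show ?thesis .
  qed
  have ib0: "integral {0..pi} (h n) \<ge> 0" for n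
    by (rule integral_nonneg[OF hint]) (simp add: h_def)
  have bnd: "bounded (range (\<lambda>n. integral {0..pi} (h n)))"
    unfolding bounded_iff using ib ib0 by (intro exI[of _ C]) auto
  have "\<Phi> integrable_on {0..pi}"
    using monotone_convergence_increasing[OF hint hmono hlim bnd] by blast
  then show ?thesis
  proof (rule integrable_spike[of _ _ "N \<union> {0,pi}"])
    show "negligible (N \<union> {0,pi})" using N by (simp add: negligible_insert)
    fix t assume "t \<in> {0..pi} - (N \<union> {0,pi})"
    then have t0: "t \<in> {0<..<pi} - N" by auto
    then show "norm (g t)^2 = \<Phi> t" using g_eq_G[OF t0] by (simp add: \<Phi>_def)
  qed
qed

end

lemma int_on_iff:
  fixes f :: "real \<Rightarrow> 'b::euclidean_space"
  assumes "S \<in> sets lebesgue"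
  shows "integrable (lebesgue_on S) f \<longleftrightarrow> f absolutely_integrable_on S"
  unfolding set_integrable_def using assms by (simp add: integrable_restrict_space)

lemma abs_int_open_closed:
  fixes f :: "real \<Rightarrow> 'b::euclidean_space"
  shows "f absolutely_integrable_on {a<..<b} \<longleftrightarrow> f absolutely_integrable_on {a..b}"
proof (rule absolutely_integrable_spike_set_eq)
  show "negligible {x \<in> {a<..<b} - {a..b}. f x \<noteq> 0}" by (rule negligible_subset[of "{}"]) auto
  show "negligible {x \<in> {a..b} - {a<..<b}. f x \<noteq> 0}"
    by (rule negligible_subset[of "{a,b}"]) (auto simp: negligible_insert)
qed

lemma sq_int_abs:
  assumes "sq_int u"
  shows "u absolutely_integrable_on {-pi..pi}"
proof -
  have S: "{-pi<..<pi} \<in> sets lebesgue" by simp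
  have m: "u \<in> borel_measurable (lebesgue_on {-pi<..<pi})" using assms by (simp add: sq_int_def Om_def)
  have "integrable (lebesgue_on {-pi<..<pi}) (\<lambda>x. norm (u x)^2)" using assms by (simp add: sq_int_def Om_def)
  then have a2: "(\<lambda>x. norm (u x)^2) absolutely_integrable_on {-pi<..<pi}" using int_on_iff[OF S] by blast
  have i1: "(\<lambda>x. 1::real) integrable_on {-pi<..<pi}"
    by (rule integrable_on_const) (simp add: lmeasurable_open)
  have i2: "(\<lambda>x. 1 + norm (u x)^2) integrable_on {-pi<..<pi}"
    using i1 a2 by (intro integrable_add) (auto dest: set_lebesgue_integral_eq_integral(1))
  have "u absolutely_integrable_on {-pi<..<pi}"
  proof (rule measurable_bounded_by_integrable_imp_absolutely_integrable[OF m S i2])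
    fix x
    have "0 \<le> (norm (u x) - 1/2)^2" by simp
    then show "norm (u x) \<le> 1 + norm (u x)^2" by (simp add: power2_eq_square algebra_simps)
  qed
  then show ?thesis using abs_int_open_closed by blast
qed

lemma sq_int_sq:
  assumes "sq_int u"
  shows "(\<lambda>x. norm (u x)^2) integrable_on {-pi..pi}"
proof -
  have S: "{-pi<..<pi} \<in> sets lebesgue" by simp
  have "integrable (lebesgue_on {-pi<..<pi}) (\<lambda>x. norm (u x)^2)" using assms by (simp add: sq_int_def Om_def)
  then have "(\<lambda>x. norm (u x)^2) absolutely_integrable_on {-pi<..<pi}" using int_on_iff[OF S] by blast
  then have "(\<lambda>x. norm (u x)^2) absolutely_integrable_on {-pi..pi}" using abs_int_open_closed by blast
  then show ?thesis by (auto dest: set_lebesgue_integral_eq_integral(1))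
qed

lemma ac_integral:
  fixes f :: "real \<Rightarrow> complex"
  assumes fa: "f absolutely_integrable_on {a..b}" and f2: "(\<lambda>x. norm (f x)^2) integrable_on {a..b}"
  shows "abs_cont_on a b (\<lambda>x. integral {a..x} f)"
  unfolding abs_cont_on_def
proof (intro allI impI)
  fix e :: real assume e: "e > 0"
  define M where "M = integral {a..b} (\<lambda>x. norm (f x)^2)"
  have M0: "M \<ge> 0" unfolding M_def by (rule integral_nonneg[OF f2]) simp
  define t where "t = e / (M + 1)"
  have t: "t > 0" using e M0 by (simp add: t_def)
  have tM: "t * M < e"
  proof -
    have "t * M < t * (M + 1)" using t by simp
    also have "\<dots> = e" using M0 by (simp add: t_def)
    finally show ?thesis .
  qed
  have fi: "f integrable_on {a..b}" using fa by (auto dest: set_lebesgue_integral_eq_integral(1))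
  have fn: "(\<lambda>x. norm (f x)) integrable_on {a..b}" using fa absolutely_integrable_on_def by blast
  show "\<exists>d>0. \<forall>(n::nat) (u::nat \<Rightarrow> real) (v::nat \<Rightarrow> real).
        (\<forall>k<n. a \<le> u k \<and> u k \<le> v k \<and> v k \<le> b) \<longrightarrow>
        (\<forall>i<n. \<forall>j<n. i \<noteq> j \<longrightarrow> v i \<le> u j \<or> v j \<le> u i) \<longrightarrow>
        (\<Sum>k<n. v k - u k) < d \<longrightarrow> (\<Sum>k<n. norm (integral {a..v k} f - integral {a..u k} f)) < e"
  proof (intro exI[of _ "e * t"] conjI allI impI)
    show "e * t > 0" using e t by simp
    fix n :: nat and u v :: "nat \<Rightarrow> real"
    assume r: "\<forall>k<n. a \<le> u k \<and> u k \<le> v k \<and> v k \<le> b"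
      and no: "\<forall>i<n. \<forall>j<n. i \<noteq> j \<longrightarrow> v i \<le> u j \<or> v j \<le> u i"
      and s: "(\<Sum>k<n. v k - u k) < e * t"
    have sub: "{u k..v k} \<subseteq> {a..b}" if "k < n" for k using r that by auto
    have bound: "norm (integral {a..v k} f - integral {a..u k} f)
        \<le> (t * integral {u k..v k} (\<lambda>x. norm (f x)^2) + (v k - u k) / t) / 2" if k: "k < n" for k
    proof -
      have uv: "a \<le> u k" "u k \<le> v k" "v k \<le> b" using r k by auto
      have fav: "f integrable_on {a..v k}" using integrable_on_subinterval[OF fi] uv by auto
      have "integral {a..u k} f + integral {u k..v k} f = integral {a..v k} f"
        by (rule Henstock_Kurzweil_Integration.integral_combine[OF uv(1,2) fav])
      then have eq: "integral {a..v k} f - integral {a..u k} f = integral {u k..v k} f" by (simp add: algebra_simps)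
      have hn: "((\<lambda>x. norm (f x)) has_integral (integral {u k..v k} (\<lambda>x. norm (f x)))) {u k..v k}"
        using integrable_on_subinterval[OF fn sub[OF k]] by blast
      have h2: "((\<lambda>x. norm (f x)^2) has_integral (integral {u k..v k} (\<lambda>x. norm (f x)^2))) {u k..v k}"
        using integrable_on_subinterval[OF f2 sub[OF k]] by blast
      have h3: "((\<lambda>x. (t * norm (f x)^2 + 1 / t) / 2) has_integral
             (t * integral {u k..v k} (\<lambda>x. norm (f x)^2) + Henstock_Kurzweil_Integration.content {u k..v k} *\<^sub>R (1 / t)) / 2) {u k..v k}"
        by (intro has_integral_divide has_integral_add has_integral_mult_right h2 has_integral_const_real)
      have pw: "norm (f x) \<le> (t * norm (f x)^2 + 1 / t) / 2" for x
      proof -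
        have "0 \<le> (t * norm (f x) - 1)^2" by simp
        then have "t * (2 * norm (f x)) \<le> t * (t * norm (f x)^2 + 1 / t)"
          using t by (simp add: power2_eq_square algebra_simps)
        then have "2 * norm (f x) \<le> t * norm (f x)^2 + 1 / t"
          using t by (simp only: mult_le_cancel_left_pos)
        then show ?thesis by simp
      qed
      have "norm (integral {u k..v k} f) \<le> integral {u k..v k} (\<lambda>x. norm (f x))"
        by (rule integral_norm_bound_integral[OF integrable_on_subinterval[OF fi sub[OF k]]])
           (use hn in auto)
      also have "\<dots> \<le> (t * integral {u k..v k} (\<lambda>x. norm (f x)^2) + Henstock_Kurzweil_Integration.content {u k..v k} *\<^sub>R (1 / t)) / 2"
        by (rule has_integral_le[OF hn h3]) (use pw in auto)
      also have "\<dots> = (t * integral {u k..v k} (\<lambda>x. norm (f x)^2) + (v k - u k) / t) / 2"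
        using uv by simp
      finally show ?thesis unfolding eq .
    qed
    have U: "(\<Sum>k<n. integral {u k..v k} (\<lambda>x. norm (f x)^2)) \<le> M"
    proof -
      have hU: "((\<lambda>x. norm (f x)^2) has_integral (\<Sum>k<n. integral {u k..v k} (\<lambda>x. norm (f x)^2))) (\<Union>k\<in>{..<n}. {u k..v k})"
      proof (rule has_integral_UN)
        show "finite {..<n}" by simp
        show "((\<lambda>x. norm (f x)^2) has_integral (integral {u k..v k} (\<lambda>x. norm (f x)^2))) {u k..v k}" if "k \<in> {..<n}" for k
          using integrable_on_subinterval[OF f2 sub] that by blast
        show "pairwise (\<lambda>i j. negligible ({u i..v i} \<inter> {u j..v j})) {..<n}"
        proof (unfold pairwise_def, intro ballI impI)
          fix i j assume ij: "i \<in> {..<n}" "j \<in> {..<n}" "i \<noteq> j"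
          then have "v i \<le> u j \<or> v j \<le> u i" using no by auto
          then have "{u i..v i} \<inter> {u j..v j} \<subseteq> {v i, u i}" by auto
          then show "negligible ({u i..v i} \<inter> {u j..v j})"
            by (rule negligible_subset[rotated]) (simp add: negligible_insert)
        qed
      qed
      have "integral (\<Union>k\<in>{..<n}. {u k..v k}) (\<lambda>x. norm (f x)^2) \<le> M"
        unfolding M_def
      proof (rule integral_subset_le)
        show "(\<Union>k\<in>{..<n}. {u k..v k}) \<subseteq> {a..b}" using sub by blast
      qed (use hU f2 in auto)
      then show ?thesis using hU by (simp add: integral_unique)
    qed
    have "(\<Sum>k<n. norm (integral {a..v k} f - integral {a..u k} f))
        \<le> (\<Sum>k<n. (t * integral {u k..v k} (\<lambda>x. norm (f x)^2) + (v k - u k) / t) / 2)"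
      by (rule sum_mono) (use bound in auto)
    also have "\<dots> = (t * (\<Sum>k<n. integral {u k..v k} (\<lambda>x. norm (f x)^2)) + (\<Sum>k<n. v k - u k) / t) / 2"
      by (simp add: sum.distrib sum_distrib_left sum_divide_distrib flip: sum_divide_distrib)
    also have "\<dots> < (e + e) / 2"
    proof -
      have "t * (\<Sum>k<n. integral {u k..v k} (\<lambda>x. norm (f x)^2)) \<le> t * M" using U t by (intro mult_left_mono) auto
      moreover have "(\<Sum>k<n. v k - u k) / t < e" using s t by (simp add: field_simps)
      ultimately have "t * (\<Sum>k<n. integral {u k..v k} (\<lambda>x. norm (f x)^2)) + (\<Sum>k<n. v k - u k) / t < e + e"
        using tM by linarith
      then show ?thesis by (intro divide_strict_right_mono) auto
    qed
    finally show "(\<Sum>k<n. norm (integral {a..v k} f - integral {a..u k} f)) < e" by simp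
  qed
qed

lemma g_sq_int:
  fixes y0 g p q f :: "real \<Rightarrow> complex"
  assumes eps: "0 < \<epsilon>" "\<epsilon> < 2"
  and y0ac: "abs_cont_on (-pi) pi y0"
  and N: "negligible N"
  and dy0: "\<And>x. x \<in> {-pi<..<pi} - N \<Longrightarrow> (y0 has_vector_derivative g x) (at x)"
  and ploc: "loc_abs_cont p"
  and eqs: "\<And>x. x \<in> {-pi<..<pi} - N \<Longrightarrow> p x = complex_of_real (sin x) * g x \<and>
               (p has_vector_derivative q x) (at x) \<and> f x = complex_of_real \<epsilon> * q x + g x"
  and sf: "sq_int f"
  shows "sq_int g"
proof -
  have pi0: "pi > 0" by simp
  have gint: "(g has_integral (y0 pi - y0 (-pi))) {-pi..pi}"
    by (rule ftc_ac[OF _ y0ac N]) (use dy0 pi0 in auto)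
  have Yint0: "(g has_integral (y0 x - y0 s)) {s..x}" if "-pi \<le> s" "s \<le> x" "x \<le> pi" for s x
    by (rule ftc_ac[OF that(2) ac_sub[OF y0ac] N]) (use that dy0 in auto)
  obtain B where B: "B \<ge> 0" "\<And>x. x \<in> {-pi..pi} \<Longrightarrow> norm (y0 x) \<le> B" using ac_bounded[OF y0ac] by blast
  have fabs: "f absolutely_integrable_on {-pi..pi}" by (rule sq_int_abs[OF sf])
  have f2: "(\<lambda>x. norm (f x)^2) integrable_on {-pi..pi}" by (rule sq_int_sq[OF sf])
  have pac: "abs_cont_on a b p" if "-pi < a" "b < pi" for a b
    using ploc that unfolding loc_abs_cont_def by blast
  interpret R: core \<epsilon> p g q f y0 N B "integral {0..pi} (\<lambda>x. norm (f x)^2)"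
  proof
    show "0 < \<epsilon>" "\<epsilon> < 2" using eps by auto
    show "abs_cont_on a b p" if "0 < a" "b < pi" for a b
    proof (rule pac)
      show "-pi < a" using that pi0 by linarith
    qed (use that in simp)
    show "negligible N" by (rule N)
    show "p x = complex_of_real (sin x) * g x \<and> (p has_vector_derivative q x) (at x) \<and> f x = complex_of_real \<epsilon> * q x + g x"
      if "x \<in> {0<..<pi} - N" for x using eqs that by auto
    show "f absolutely_integrable_on {0..pi}"
      by (rule absolutely_integrable_on_subinterval[OF fabs]) auto
    show "(\<lambda>x. norm (f x)^2) integrable_on {0..pi}"
      by (rule integrable_on_subinterval[OF f2]) auto
    show "integral {0..pi} (\<lambda>x. norm (f x)^2) = integral {0..pi} (\<lambda>x. norm (f x)^2)" ..
    show "(g has_integral (y0 x - y0 s)) {s..x}" if "0 < s" "s \<le> x" "x < pi" for s x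
      by (rule Yint0) (use that in auto)
    show "norm (y0 x) \<le> B" if "0 < x" "x < pi" for x using B that by auto
  qed
  have right: "(\<lambda>t. norm (g t)^2) integrable_on {0..pi}" by (rule R.g2_int)
  have Nm: "negligible (uminus ` N)"
    by (rule negligible_differentiable_image_negligible[OF order_refl N]) (auto intro: derivative_intros)
  have fl: "f absolutely_integrable_on {-pi..0}"
    by (rule absolutely_integrable_on_subinterval[OF fabs]) auto
  have flr: "(\<lambda>x. f (-x)) absolutely_integrable_on {0..pi}"
    using fl absolutely_integrable_reflect_real[where f=f and a="-pi" and b=0] by simp
  have f2l: "(\<lambda>x. norm (f x)^2) integrable_on {-pi..0}"
    by (rule integrable_on_subinterval[OF f2]) auto
  interpret L: core \<epsilon> "\<lambda>x. p (-x)" "\<lambda>x. - g (-x)" "\<lambda>x. - q (-x)" "\<lambda>x. - f (-x)" "\<lambda>x. y0 (-x)" "uminus ` N" B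
     "integral {0..pi} (\<lambda>x. norm (- f (-x))^2)"
  proof
    show "0 < \<epsilon>" "\<epsilon> < 2" using eps by auto
    show "abs_cont_on a b (\<lambda>x. p (-x))" if "0 < a" "b < pi" for a b
    proof -
      have "-pi < -b" "-a < pi" using that pi0 by linarith+
      then show ?thesis using ac_reflect[OF pac[of "-b" "-a"]] by simp
    qed
    show "negligible (uminus ` N)" by (rule Nm)
    fix x assume x: "x \<in> {0<..<pi} - uminus ` N"
    then have mx: "-x \<in> {-pi<..<pi} - N" by (auto simp: image_iff)
    note e = eqs[OF mx]
    have d1: "((\<lambda>x. - x) has_vector_derivative (-1)) (at x)"
      by (auto intro!: derivative_eq_intros)
    have "((p \<circ> (\<lambda>x. - x)) has_vector_derivative ((-1) *\<^sub>R q (-x))) (at x)"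
      by (rule vector_diff_chain_at[OF d1]) (use e in simp)
    then have "((\<lambda>x. p (-x)) has_vector_derivative - q (-x)) (at x)" by (simp add: o_def)
    moreover have "p (-x) = complex_of_real (sin x) * - g (-x)" using e by simp
    moreover have "- f (-x) = complex_of_real \<epsilon> * - q (-x) + - g (-x)" using e by simp
    ultimately show "p (-x) = complex_of_real (sin x) * - g (-x) \<and>
        ((\<lambda>x. p (-x)) has_vector_derivative - q (-x)) (at x) \<and> - f (-x) = complex_of_real \<epsilon> * - q (-x) + - g (-x)"
      by blast
  next
    show "(\<lambda>x. - f (-x)) absolutely_integrable_on {0..pi}"
      using flr unfolding absolutely_integrable_on_def by (auto intro: integrable_neg)
    have "(\<lambda>x. norm (f (-x))^2) integrable_on {0..pi}"
      using f2l Henstock_Kurzweil_Integration.integrable_reflect_real[where f="\<lambda>x. norm (f x)^2" and a="-pi" and b=0] by simp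
    then show "(\<lambda>x. norm (- f (-x))^2) integrable_on {0..pi}" by simp
    show "integral {0..pi} (\<lambda>x. norm (- f (-x))^2) = integral {0..pi} (\<lambda>x. norm (- f (-x))^2)" ..
    show "((\<lambda>x. - g (-x)) has_integral (y0 (-x) - y0 (-s))) {s..x}" if "0 < s" "s \<le> x" "x < pi" for s x
    proof -
      have "(g has_integral (y0 (-s) - y0 (-x))) {-x..-s}" by (rule Yint0) (use that in auto)
      then have "((\<lambda>t. g (-t)) has_integral (y0 (-s) - y0 (-x))) {s..x}"
        using has_integral_reflect_real[where f=g and i="y0 (-s) - y0 (-x)" and a="-x" and b="-s"] by simp
      from has_integral_neg[OF this] show ?thesis by simp
    qed
    show "norm (y0 (-x)) \<le> B" if "0 < x" "x < pi" for x using B that by auto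
  qed
  have "(\<lambda>t. norm (- g (-t))^2) integrable_on {0..pi}" by (rule L.g2_int)
  then have "(\<lambda>t. norm (g (-t))^2) integrable_on {0..pi}" by simp
  then have left: "(\<lambda>t. norm (g t)^2) integrable_on {-pi..0}"
    using Henstock_Kurzweil_Integration.integrable_reflect_real[where f="\<lambda>t. norm (g t)^2" and a="-pi" and b=0] by simp
  have "(\<lambda>t. norm (g t)^2) absolutely_integrable_on ({-pi..0} \<union> {0..pi})"
    by (intro absolutely_integrable_Un nonnegative_absolutely_integrable_1 left right) auto
  moreover have "{-pi..0} \<union> {0..pi} = {-pi..pi}" using pi0 by auto
  ultimately have "(\<lambda>t. norm (g t)^2) absolutely_integrable_on {-pi<..<pi}"
    using abs_int_open_closed by metis
  then have i2: "integrable Om (\<lambda>t. norm (g t)^2)"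
    unfolding Om_def using int_on_iff[where S="{-pi<..<pi}" and f="\<lambda>t. norm (g t)^2"] by simp
  have "g integrable_on {-pi<..<pi}"
    using gint has_integral_open_interval[of g _ "-pi" pi] by (auto simp: box_real)
  then have "g \<in> borel_measurable Om" unfolding Om_def by (rule integrable_imp_measurable)
  then show ?thesis unfolding sq_int_def using i2 by simp
qed

lemma P_exists:
  fixes y0 g p q f :: "real \<Rightarrow> complex"
  assumes eps: "0 < \<epsilon>"
  and y0ac: "abs_cont_on (-pi) pi y0"
  and N: "negligible N"
  and dy0: "\<And>x. x \<in> {-pi<..<pi} - N \<Longrightarrow> (y0 has_vector_derivative g x) (at x)"
  and ploc: "loc_abs_cont p"
  and eqs: "\<And>x. x \<in> {-pi<..<pi} - N \<Longrightarrow> p x = complex_of_real (sin x) * g x \<and>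
               (p has_vector_derivative q x) (at x) \<and> f x = complex_of_real \<epsilon> * q x + g x"
  and sf: "sq_int f"
  obtains P where "abs_cont_on (-pi) pi P" "\<And>x. x \<in> {-pi<..<pi} \<Longrightarrow> P x = p x"
proof -
  have pi0: "pi > 0" by simp
  have fabs: "f absolutely_integrable_on {-pi..pi}" by (rule sq_int_abs[OF sf])
  have f2: "(\<lambda>x. norm (f x)^2) integrable_on {-pi..pi}" by (rule sq_int_sq[OF sf])
  have fi: "f integrable_on {-pi..pi}" using fabs by (auto dest: set_lebesgue_integral_eq_integral(1))
  define I where "I x = integral {-pi..x} f" for x
  define c0 where "c0 = p 0 - complex_of_real (1/\<epsilon>) * (I 0 - y0 0)"
  define P where "P x = complex_of_real (1/\<epsilon>) * (I x - y0 x) + c0" for x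
  have acI: "abs_cont_on (-pi) pi I" unfolding I_def by (rule ac_integral[OF fabs f2])
  have acP: "abs_cont_on (-pi) pi P"
    unfolding P_def by (intro ac_add ac_scale ac_diff acI y0ac ac_const)
  have pac: "abs_cont_on a b p" if "-pi < a" "b < pi" for a b
    using ploc that unfolding loc_abs_cont_def by blast
  have D: "p v - p u = complex_of_real (1/\<epsilon>) * ((I v - I u) - (y0 v - y0 u))"
    if uv: "-pi < u" "u \<le> v" "v < pi" for u v
  proof -
    have hq: "(q has_integral (p v - p u)) {u..v}"
      by (rule ftc_ac[OF uv(2) pac[OF uv(1,3)] N]) (use eqs uv in auto)
    have hg: "(g has_integral (y0 v - y0 u)) {u..v}"
      by (rule ftc_ac[OF uv(2) ac_sub[OF y0ac] N]) (use dy0 uv in auto)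
    have fv: "f integrable_on {-pi..v}" using integrable_on_subinterval[OF fi] uv by auto
    have "integral {-pi..u} f + integral {u..v} f = integral {-pi..v} f"
      by (rule Henstock_Kurzweil_Integration.integral_combine[OF _ uv(2) fv]) (use uv in auto)
    then have Ieq: "I v - I u = integral {u..v} f" by (simp add: I_def algebra_simps)
    have hf: "(f has_integral (I v - I u)) {u..v}"
      unfolding Ieq using integrable_on_subinterval[OF fi] uv by auto
    have h2: "((\<lambda>t. complex_of_real (1/\<epsilon>) * (f t - g t)) has_integral
              complex_of_real (1/\<epsilon>) * ((I v - I u) - (y0 v - y0 u))) {u..v}"
      by (intro has_integral_mult_right has_integral_diff hf hg)
    have h3: "(q has_integral complex_of_real (1/\<epsilon>) * ((I v - I u) - (y0 v - y0 u))) {u..v}"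
    proof (rule has_integral_spike[OF _ _ h2, of "N \<union> {u,v}"])
      show "negligible (N \<union> {u,v})" using N by (simp add: negligible_insert)
      fix t assume t: "t \<in> {u..v} - (N \<union> {u,v})"
      then have "t \<in> {-pi<..<pi} - N" using uv by auto
      then have "f t = complex_of_real \<epsilon> * q t + g t" using eqs by blast
      then show "q t = complex_of_real (1/\<epsilon>) * (f t - g t)" using eps by (simp add: field_simps)
    qed
    show ?thesis using has_integral_unique[OF hq h3] .
  qed
  have "P x = p x" if x: "x \<in> {-pi<..<pi}" for x
  proof (cases "0 \<le> x")
    case True
    have "p x - p 0 = complex_of_real (1/\<epsilon>) * ((I x - I 0) - (y0 x - y0 0))"
      by (rule D) (use x True in auto)
    then show ?thesis unfolding P_def c0_def by (simp add: algebra_simps)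
  next
    case False
    have "p 0 - p x = complex_of_real (1/\<epsilon>) * ((I 0 - I x) - (y0 0 - y0 x))"
      by (rule D) (use x False in auto)
    then show ?thesis unfolding P_def c0_def by (simp add: algebra_simps)
  qed
  then show ?thesis using that acP by blast
qed

theorem theorem1:
  fixes \<epsilon> :: real
  assumes "0 < \<epsilon>" and "\<epsilon> < 2"
  shows "(\<forall>y f. graph_L \<epsilon> y f \<longleftrightarrow> graph_MS \<epsilon> y f) \<and>
         {y. \<exists>f. graph_L \<epsilon> y f} = {y. \<exists>f. graph_MS \<epsilon> y f}"
proof -
  have main: "graph_L \<epsilon> y f \<longleftrightarrow> graph_MS \<epsilon> y f" for y f
  proof
    assume L: "graph_L \<epsilon> y f"
    then obtain y0 g p q where sy: "sq_int y" and sf: "sq_int f"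
      and A1: "AE x in Om. y x = y0 x" and y0ac: "abs_cont_on (-pi) pi y0" and per: "y0 (-pi) = y0 pi"
      and A2: "AE x in Om. (y0 has_vector_derivative g x) (at x)"
      and ploc: "loc_abs_cont p" and A3: "AE x in Om. p x = complex_of_real (sin x) * g x"
      and A4: "AE x in Om. (p has_vector_derivative q x) (at x)"
      and A5: "AE x in Om. f x = complex_of_real \<epsilon> * q x + g x"
      unfolding graph_L_def by blast
    obtain N2 where N2: "negligible N2" "\<And>x. x \<in> {-pi<..<pi} - N2 \<Longrightarrow> (y0 has_vector_derivative g x) (at x)"
      using AE_Om_negl[OF A2] by blast
    obtain N3 where N3: "negligible N3" "\<And>x. x \<in> {-pi<..<pi} - N3 \<Longrightarrow> p x = complex_of_real (sin x) * g x"
      using AE_Om_negl[OF A3] by blast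
    obtain N4 where N4: "negligible N4" "\<And>x. x \<in> {-pi<..<pi} - N4 \<Longrightarrow> (p has_vector_derivative q x) (at x)"
      using AE_Om_negl[OF A4] by blast
    obtain N5 where N5: "negligible N5" "\<And>x. x \<in> {-pi<..<pi} - N5 \<Longrightarrow> f x = complex_of_real \<epsilon> * q x + g x"
      using AE_Om_negl[OF A5] by blast
    define N where "N = N2 \<union> N3 \<union> N4 \<union> N5"
    have N: "negligible N" unfolding N_def using N2 N3 N4 N5 by (simp add: negligible_Un)
    have dy0: "\<And>x. x \<in> {-pi<..<pi} - N \<Longrightarrow> (y0 has_vector_derivative g x) (at x)"
      using N2 by (auto simp: N_def)
    have eqs: "\<And>x. x \<in> {-pi<..<pi} - N \<Longrightarrow> p x = complex_of_real (sin x) * g x \<and>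
               (p has_vector_derivative q x) (at x) \<and> f x = complex_of_real \<epsilon> * q x + g x"
      using N3 N4 N5 by (auto simp: N_def)
    have sg: "sq_int g" by (rule g_sq_int[OF assms y0ac N dy0 ploc eqs sf])
    obtain P where P: "abs_cont_on (-pi) pi P" "\<And>x. x \<in> {-pi<..<pi} \<Longrightarrow> P x = p x"
      using P_exists[OF assms(1) y0ac N dy0 ploc eqs sf] by blast
    have S: "{-pi<..<pi} \<in> sets lebesgue" by simp
    have B1: "AE x in Om. P x = complex_of_real (sin x) * g x"
      unfolding Om_def by (rule negl_AE_on[OF N S]) (use P eqs in auto)
    have B2: "AE x in Om. (P has_vector_derivative q x) (at x)"
      unfolding Om_def
    proof (rule negl_AE_on[OF N S])
      fix x assume x: "x \<in> {-pi<..<pi} - N"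
      show "(P has_vector_derivative q x) (at x)"
      proof (rule has_vector_derivative_transform_within_open[of p "q x" x "{-pi<..<pi}"])
        show "(p has_vector_derivative q x) (at x)" using eqs[OF x] by blast
      qed (use x P in auto)
    qed
    have "graph_S y g" unfolding graph_S_def using sy sg A1 y0ac per A2 by blast
    moreover have "graph_M \<epsilon> g f" unfolding graph_M_def using sg sf P(1) B1 B2 A5 by blast
    ultimately show "graph_MS \<epsilon> y f" unfolding graph_MS_def by blast
  next
    assume "graph_MS \<epsilon> y f"
    then obtain z where S: "graph_S y z" and M: "graph_M \<epsilon> z f" unfolding graph_MS_def by blast
    obtain y0 where sy: "sq_int y" and A1: "AE x in Om. y x = y0 x" and y0ac: "abs_cont_on (-pi) pi y0"
      and per: "y0 (-pi) = y0 pi" and A2: "AE x in Om. (y0 has_vector_derivative z x) (at x)"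
      using S unfolding graph_S_def by blast
    obtain p q where sf: "sq_int f" and pac: "abs_cont_on (-pi) pi p"
      and A3: "AE x in Om. p x = complex_of_real (sin x) * z x"
      and A4: "AE x in Om. (p has_vector_derivative q x) (at x)"
      and A5: "AE x in Om. f x = complex_of_real \<epsilon> * q x + z x"
      using M unfolding graph_M_def by blast
    have ploc: "loc_abs_cont p"
      unfolding loc_abs_cont_def using ac_sub[OF pac] by auto
    show "graph_L \<epsilon> y f"
      unfolding graph_L_def using sy sf A1 y0ac per A2 ploc A3 A4 A5 by blast
  qed
  then show ?thesis by auto
qed

end
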